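(* The assignment $$\Psi:\quad\star \mapsto \bigoplus_{\mathbf{s} \in \widehat{\rm OSeq}[d]} \mathbf{s} \quad\text{ and }\quad b \mapsto M(b),$$ with $M(b)_{(\mathbf{t},\mathbf{s})} \in \operatorname{Hom}_{\mathcal{OB}(m-n)}(\mathbf{s},\mathbf{t})$ equal to the unique subdiagram of $b$ in $\widehat{\mathcal{B}}[d]_\mathbf{s}^\mathbf{t}$, or zero if such a diagram does not exist, defines a faithful functor from ${\rm Br}_d(\delta)$ to ${\rm Mat}(\mathcal{OB}(m-n))$.
   Context: Work over $\mathbb{C}$. Fix $m,n\in\mathbb{Z}_{\geq 0}$ and $d\in\mathbb{Z}_{\geq0}$. Let $V$ be a superspace of superdimension $2m|2n$ (even case) or $2m+1|2n$ (odd case) with a non-degenerate supersymmetric bilinear form, and let $\delta$ be its supertrace, i.e. $\delta=2m-2n$ in the even case and $\delta=2m+1-2n$ in the odd case. ${\rm Br}_d(\delta)$ is the Brauer algebra, with basis the set $\mathcal{B}[d]$ of Brauer diagrams (partitions of $\{1,\dots,d,1^*,\dots,d^*\}$ into $d$ two-element subsets), multiplication by concatenation with each removed closed loop giving a factor $\delta$; it is generated by $s_i$ (crossing strands $i,i+1$) and $e_i$ (cap-cup at $i,i+1$). It is regarded as a category with one object $\star$. Set ${\rm OSeq}[d]=\{\wedge,\vee\}^{\times d}$ and $\widehat{\rm OSeq}[d]=\{\wedge,\vee,\circ\}^{\times d}$ (generalized orientations). $\widehat{\mathcal{B}}[d]$ is the set of generalized Brauer diagrams on $2d$ vertices, i.e.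 partitions of $\{1,\dots,d,1^*,\dots,d^*\}$ into subsets of cardinality 1 or 2. For $\mathbf{s},\mathbf{t}\in\widehat{\rm OSeq}[d]$, $\widehat{\mathcal{B}}[d]_\mathbf{s}^\mathbf{t}$ is the set of $b\in\widehat{\mathcal{B}}[d]$ such that $(\mathbf{t},b,\mathbf{s})$ is oriented: if $\{i,j\}\in b$, $i\neq j$, then $\{\mathbf{t}_i,\mathbf{t}_j\}=\{\wedge,\vee\}$; if $\{i^*,j^*\}\in b$, $i\neq j$, then $\{\mathbf{s}_i,\mathbf{s}_j\}=\{\wedge,\vee\}$; if $\{i,j^*\}\in b$ then $\mathbf{t}_i=\mathbf{s}_j\in\{\wedge,\vee\}$; if $\{i\}\in b$ (resp. $\{i^*\}\in b$) then $\mathbf{t}_i=\circ$ (resp. $\mathbf{s}_i=\circ$). The oriented Brauer category $\mathcal{OB}(m-n)$ is the $\mathbb{C}$-linear category whose objects are generalized orientation sequences (of any finite length), with $\operatorname{Hom}(\mathbf{s},\mathbf{t})$ having basis $\widehat{\mathcal{B}}_\mathbf{s}^\mathbf{t}$, and composition by stacking diagrams, gluing along $\mathbf{s}$, removing internal $\circ$'s and internal closed circles, each removed circle contributing a factor $m-n$. ${\rm Mat}(\mathcal{OB}(m-n))$ is its additive closure: objects are formal finite direct sums of objects, morphisms are matrices of morphisms with matrix composition. A generalized Brauer diagram $b'$ is a subdiagram of $b$ if $b'$ refines the partition $b$, i.e. is obtained from $b$ by removing some arcs and replacing their endpoints by singletons ($\circ$'s). *)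

theory Defs
  imports Complex_Main
begin

text \<open>Vertices of a diagram on 2d vertices: Inl i is the top vertex i, Inr i is the
bottom vertex i*, with indices 0..d-1 (0-based instead of 1..d).\<close>

type_synonym vert = "nat + nat"
type_synonym diag = "vert set set"

definition verts :: "nat \<Rightarrow> vert set" where
  "verts d = Inl ` {..<d} \<union> Inr ` {..<d}"

definition gen_brauer :: "nat \<Rightarrow> diag set" where
  "gen_brauer d = {b. (\<forall>B\<in>b. B \<subseteq> verts d \<and> (card B = 1 \<or> card B = 2))
                      \<and> (\<forall>x\<in>verts d. \<exists>!B. B \<in> b \<and> x \<in> B)}"

definition brauer :: "nat \<Rightarrow> diag set" where
  "brauer d = {b \<in> gen_brauer d. \<forall>B\<in>b. card B = 2}"

definition subdiagram :: "nat \<Rightarrow> diag \<Rightarrow> diag \<Rightarrow> bool" where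
  "subdiagram d b' b \<longleftrightarrow> b' \<in> gen_brauer d \<and> (\<forall>B'\<in>b'. \<exists>B\<in>b. B' \<subseteq> B)"

datatype ori = Up | Down | Circ   \<comment> \<open>wedge, vee, circ\<close>

definition oseq_hat :: "nat \<Rightarrow> ori list set" where
  "oseq_hat d = {s. length s = d}"

definition oriented :: "ori list \<Rightarrow> diag \<Rightarrow> ori list \<Rightarrow> bool" where
  "oriented t b s \<longleftrightarrow> (\<forall>B\<in>b.
      (\<forall>i j. B = {Inl i, Inl j} \<and> i \<noteq> j \<longrightarrow> {t!i, t!j} = {Up, Down})
    \<and> (\<forall>i j. B = {Inr i, Inr j} \<and> i \<noteq> j \<longrightarrow> {s!i, s!j} = {Up, Down})
    \<and> (\<forall>i j. B = {Inl i, Inr j} \<longrightarrow> t!i = s!j \<and> t!i \<in> {Up, Down})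
    \<and> (\<forall>i. B = {Inl i} \<longrightarrow> t!i = Circ)
    \<and> (\<forall>i. B = {Inr i} \<longrightarrow> s!i = Circ))"

definition hatB :: "nat \<Rightarrow> ori list \<Rightarrow> ori list \<Rightarrow> diag set" where
  "hatB d s t = {b \<in> gen_brauer d. oriented t b s}"

datatype lvl = Top nat | Mid nat | Bot nat

definition up_v :: "vert \<Rightarrow> lvl" where
  "up_v x = (case x of Inl i \<Rightarrow> Top i | Inr i \<Rightarrow> Mid i)"

definition lo_v :: "vert \<Rightarrow> lvl" where
  "lo_v x = (case x of Inl i \<Rightarrow> Mid i | Inr i \<Rightarrow> Bot i)"

definition outer_v :: "vert \<Rightarrow> lvl" where
  "outer_v x = (case x of Inl i \<Rightarrow> Top i | Inr i \<Rightarrow> Bot i)"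

text \<open>Graph obtained by placing b1 on top of b2 (bottom of b1 glued to top of b2).\<close>
definition stack_rel :: "diag \<Rightarrow> diag \<Rightarrow> (lvl \<times> lvl) set" where
  "stack_rel b1 b2 =
     {(up_v x, up_v y) | x y. \<exists>B\<in>b1. x \<in> B \<and> y \<in> B}
   \<union> {(lo_v x, lo_v y) | x y. \<exists>B\<in>b2. x \<in> B \<and> y \<in> B}"

text \<open>The resulting diagram (b1 above b2), after removing internal components.\<close>
definition comp_diag :: "nat \<Rightarrow> diag \<Rightarrow> diag \<Rightarrow> diag" where
  "comp_diag d b1 b2 =
     {{x \<in> verts d. (outer_v y, outer_v x) \<in> (stack_rel b1 b2)\<^sup>*} | y. y \<in> verts d}"

text \<open>Number of removed closed circles (internal components with at least two vertices;
  internal components with one vertex are removed circ's).\<close>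
definition n_loops :: "nat \<Rightarrow> diag \<Rightarrow> diag \<Rightarrow> nat" where
  "n_loops d b1 b2 = card
     {{v. (Mid j, v) \<in> (stack_rel b1 b2)\<^sup>*} | j. j < d
        \<and> (\<forall>x\<in>verts d. (Mid j, outer_v x) \<notin> (stack_rel b1 b2)\<^sup>*)
        \<and> 2 \<le> card {v. (Mid j, v) \<in> (stack_rel b1 b2)\<^sup>*}}"

definition bvec :: "diag \<Rightarrow> diag \<Rightarrow> complex" where
  "bvec b = (\<lambda>c. if c = b then 1 else 0)"

text \<open>Elements: complex linear combinations of Brauer diagrams (coefficient functions).\<close>
definition br_alg :: "nat \<Rightarrow> (diag \<Rightarrow> complex) set" where
  "br_alg d = {x. \<forall>c. c \<notin> brauer d \<longrightarrow> x c = 0}"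

definition br_mult :: "nat \<Rightarrow> complex \<Rightarrow> (diag \<Rightarrow> complex) \<Rightarrow> (diag \<Rightarrow> complex) \<Rightarrow> diag \<Rightarrow> complex" where
  "br_mult d \<delta> x y = (\<lambda>c. \<Sum>b1\<in>brauer d. \<Sum>b2\<in>brauer d.
      if comp_diag d b1 b2 = c then x b1 * y b2 * \<delta> ^ n_loops d b1 b2 else 0)"

definition br_one :: "nat \<Rightarrow> diag \<Rightarrow> complex" where
  "br_one d = bvec {{Inl i, Inr i} | i. i < d}"

text \<open>Morphisms in Hom(s,t) are coefficient functions supported on hatB d s t.
  Composition f o g (f above g), bilinear, each removed circle giving a factor q.\<close>
definition ob_comp :: "nat \<Rightarrow> complex \<Rightarrow> (diag \<Rightarrow> complex) \<Rightarrow> (diag \<Rightarrow> complex) \<Rightarrow> diag \<Rightarrow> complex" where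
  "ob_comp d q f g = (\<lambda>c. \<Sum>b1\<in>gen_brauer d. \<Sum>b2\<in>gen_brauer d.
      if comp_diag d b1 b2 = c then f b1 * g b2 * q ^ n_loops d b1 b2 else 0)"

definition ob_id :: "nat \<Rightarrow> ori list \<Rightarrow> diag" where
  "ob_id d s = {{Inl i, Inr i} | i. i < d \<and> s!i \<noteq> Circ}
             \<union> {{Inl i} | i. i < d \<and> s!i = Circ} \<union> {{Inr i} | i. i < d \<and> s!i = Circ}"

text \<open>Endomorphisms in Mat(OB(q)) of the object (direct sum over oseq_hat d of s):
  matrices indexed by (t,s), entry (t,s) in Hom(s,t). Entries outside the index set are 0.\<close>
type_synonym matmor = "ori list \<times> ori list \<Rightarrow> diag \<Rightarrow> complex"

definition mat_comp :: "nat \<Rightarrow> complex \<Rightarrow> matmor \<Rightarrow> matmor \<Rightarrow> matmor" where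
  "mat_comp d q E F = (\<lambda>(u, s). if u \<in> oseq_hat d \<and> s \<in> oseq_hat d
       then (\<lambda>c. \<Sum>t\<in>oseq_hat d. ob_comp d q (E (u, t)) (F (t, s)) c) else (\<lambda>_. 0))"

definition mat_id :: "nat \<Rightarrow> matmor" where
  "mat_id d = (\<lambda>(t, s). if t \<in> oseq_hat d \<and> s \<in> oseq_hat d \<and> t = s
       then bvec (ob_id d s) else (\<lambda>_. 0))"

definition Mb :: "nat \<Rightarrow> diag \<Rightarrow> matmor" where
  "Mb d b = (\<lambda>(t, s). if t \<in> oseq_hat d \<and> s \<in> oseq_hat d
       \<and> (\<exists>b'. b' \<in> hatB d s t \<and> subdiagram d b' b)
     then bvec (THE b'. b' \<in> hatB d s t \<and> subdiagram d b' b) else (\<lambda>_. 0))"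

definition Psi :: "nat \<Rightarrow> (diag \<Rightarrow> complex) \<Rightarrow> matmor" where
  "Psi d x = (\<lambda>ts c. \<Sum>b\<in>brauer d. x b * Mb d b ts c)"

end

theory Submission
  imports Defs "HOL-Library.FuncSet"
begin


lemma gb_part: "b \<in> gen_brauer d \<Longrightarrow> x \<in> verts d \<Longrightarrow> \<exists>!B. B \<in> b \<and> x \<in> B"
  unfolding gen_brauer_def by blast

lemma gb_sub: "b \<in> gen_brauer d \<Longrightarrow> B \<in> b \<Longrightarrow> B \<subseteq> verts d"
  unfolding gen_brauer_def by blast

lemma gb_card: "b \<in> gen_brauer d \<Longrightarrow> B \<in> b \<Longrightarrow> card B = 1 \<or> card B = 2"
  unfolding gen_brauer_def by blast

lemma br_gb: "b \<in> brauer d \<Longrightarrow> b \<in> gen_brauer d"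
  unfolding brauer_def by blast

lemma br_card: "b \<in> brauer d \<Longrightarrow> B \<in> b \<Longrightarrow> card B = 2"
  unfolding brauer_def by blast

definition ptn :: "diag \<Rightarrow> vert \<Rightarrow> vert" where
  "ptn b x = (THE y. y \<noteq> x \<and> {x,y} \<in> b)"

lemma ptn_ex:
  assumes b: "b \<in> brauer d" and x: "x \<in> verts d"
  shows "\<exists>y. y \<noteq> x \<and> {x,y} \<in> b \<and> (\<forall>B. B \<in> b \<and> x \<in> B \<longrightarrow> B = {x,y})"
proof -
  obtain B where B: "B \<in> b" "x \<in> B" and u: "\<And>B'. B' \<in> b \<and> x \<in> B' \<Longrightarrow> B' = B"
    using gb_part[OF br_gb[OF b] x] by blast
  have "card B = 2" using br_card[OF b B(1)] .
  then obtain a c where ac: "a \<noteq> c" "B = {a,c}" by (auto simp: card_2_iff)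
  then obtain y where "y \<noteq> x" "B = {x,y}" using B(2) by (metis insert_commute insertE singletonD)
  thus ?thesis using B u by metis
qed

lemma ptn_props:
  assumes b: "b \<in> brauer d" and x: "x \<in> verts d"
  shows "ptn b x \<noteq> x" "{x, ptn b x} \<in> b" "\<And>B. B \<in> b \<Longrightarrow> x \<in> B \<Longrightarrow> B = {x, ptn b x}"
proof -
  obtain y where y: "y \<noteq> x" "{x,y} \<in> b" "\<forall>B. B \<in> b \<and> x \<in> B \<longrightarrow> B = {x,y}"
    using ptn_ex[OF b x] by blast
  have "ptn b x = y" unfolding ptn_def
  proof (rule the_equality)
    show "y \<noteq> x \<and> {x, y} \<in> b" using y by blast
    fix z assume "z \<noteq> x \<and> {x, z} \<in> b"
    then have "{x,z} = {x,y}" using y(3) by blast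
    thus "z = y" using \<open>z \<noteq> x \<and> _\<close> by (auto simp: doubleton_eq_iff)
  qed
  thus "ptn b x \<noteq> x" "{x, ptn b x} \<in> b" "\<And>B. B \<in> b \<Longrightarrow> x \<in> B \<Longrightarrow> B = {x, ptn b x}"
    using y by auto
qed

lemma ptn_verts:
  assumes b: "b \<in> brauer d" and x: "x \<in> verts d"
  shows "ptn b x \<in> verts d"
  using gb_sub[OF br_gb[OF b] ptn_props(2)[OF b x]] by auto

lemma ptn_ptn:
  assumes b: "b \<in> brauer d" and x: "x \<in> verts d"
  shows "ptn b (ptn b x) = x"
proof -
  have y: "ptn b x \<in> verts d" by (rule ptn_verts[OF b x])
  have "{x, ptn b x} = {ptn b x, ptn b (ptn b x)}"
    using ptn_props(3)[OF b y ptn_props(2)[OF b x]] by auto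
  thus ?thesis using ptn_props(1)[OF b y] ptn_props(1)[OF b x] by (auto simp: doubleton_eq_iff)
qed

lemma br_block:
  assumes b: "b \<in> brauer d" and B: "B \<in> b"
  shows "\<exists>x\<in>verts d. B = {x, ptn b x}"
proof -
  have "card B = 2" using br_card[OF b B] .
  then obtain x where "x \<in> B" by fastforce
  moreover have "x \<in> verts d" using gb_sub[OF br_gb[OF b] B] \<open>x \<in> B\<close> by auto
  ultimately show ?thesis using ptn_props(3)[OF b _ B] by blast
qed


definition labv :: "ori list \<Rightarrow> ori list \<Rightarrow> vert \<Rightarrow> ori" where
  "labv t s x = (case x of Inl i \<Rightarrow> t!i | Inr i \<Rightarrow> s!i)"

definition Wd :: "ori list \<Rightarrow> ori list \<Rightarrow> vert \<Rightarrow> bool" where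
  "Wd t s x = ((labv t s x = Up) = isl x)"

lemma oriented_single: "oriented t {{x}} s \<longleftrightarrow> labv t s x = Circ"
  by (cases x) (auto simp: oriented_def labv_def doubleton_eq_iff)

lemma ori_pair_aux: "({a, b} = {Up, Down}) \<longleftrightarrow> (a \<noteq> Circ \<and> b \<noteq> Circ \<and> (a = Up) \<noteq> (b = Up))"
  by (cases a; cases b) (auto simp: doubleton_eq_iff)

lemma ori_eq_aux: "(a = b \<and> a \<in> {Up, Down}) \<longleftrightarrow> (a \<noteq> Circ \<and> b \<noteq> Circ \<and> (a = Up) = (b = Up))"
  by (cases a; cases b) auto

lemma oriented_LL: "i \<noteq> j \<Longrightarrow> oriented t {{Inl i, Inl j}} s \<longleftrightarrow> {t!i, t!j} = {Up,Down}"
  unfolding oriented_def by (auto simp: doubleton_eq_iff insert_commute)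
lemma oriented_RR: "i \<noteq> j \<Longrightarrow> oriented t {{Inr i, Inr j}} s \<longleftrightarrow> {s!i, s!j} = {Up,Down}"
  unfolding oriented_def by (auto simp: doubleton_eq_iff insert_commute)
lemma oriented_LR: "oriented t {{Inl i, Inr j}} s \<longleftrightarrow> (t!i = s!j \<and> t!i \<in> {Up,Down})"
  unfolding oriented_def by (auto simp: doubleton_eq_iff)
lemma oriented_RL: "oriented t {{Inr j, Inl i}} s \<longleftrightarrow> (t!i = s!j \<and> t!i \<in> {Up,Down})"
  using oriented_LR by (simp add: insert_commute)

lemma oriented_pair:
  assumes "x \<noteq> y"
  shows "oriented t {{x,y}} s \<longleftrightarrow> labv t s x \<noteq> Circ \<and> labv t s y \<noteq> Circ \<and> Wd t s x \<noteq> Wd t s y"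
proof (cases x; cases y)
  fix i j assume "x = Inl i" "y = Inl j" thus ?thesis using assms
    by (simp add: oriented_LL labv_def Wd_def ori_pair_aux)
next
  fix i j assume "x = Inl i" "y = Inr j" thus ?thesis
    by (cases "t!i"; cases "s!j") (simp_all add: oriented_LR labv_def Wd_def)
next
  fix i j assume "x = Inr i" "y = Inl j" thus ?thesis
    by (cases "t!j"; cases "s!i") (simp_all add: oriented_RL labv_def Wd_def)
next
  fix i j assume "x = Inr i" "y = Inr j" thus ?thesis using assms
    by (simp add: oriented_RR labv_def Wd_def ori_pair_aux)
qed


definition okb :: "nat \<Rightarrow> diag \<Rightarrow> ori list \<Rightarrow> ori list \<Rightarrow> bool" where
 "okb d b t s \<longleftrightarrow> (\<forall>x\<in>verts d. (labv t s x = Circ \<longleftrightarrow> labv t s (ptn b x) = Circ)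
      \<and> (labv t s x \<noteq> Circ \<longrightarrow> Wd t s x \<noteq> Wd t s (ptn b x)))"

definition sub :: "nat \<Rightarrow> diag \<Rightarrow> (vert \<Rightarrow> ori) \<Rightarrow> diag" where
  "sub d b l = {B\<in>b. \<forall>x\<in>B. l x \<noteq> Circ} \<union> {{x} | x. x \<in> verts d \<and> l x = Circ}"

lemma oriented_iff: "oriented t b s \<longleftrightarrow> (\<forall>B\<in>b. oriented t {B} s)"
  by (simp add: oriented_def)

lemma sub_ok:
  assumes b: "b \<in> brauer d" and ok: "okb d b t s"
  shows "sub d b (labv t s) \<in> hatB d s t" "subdiagram d (sub d b (labv t s)) b"
proof -
  let ?l = "labv t s"
  let ?S = "sub d b ?l"
  have gb: "b \<in> gen_brauer d" using b by (rule br_gb)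
  have blocks: "\<And>B. B \<in> ?S \<Longrightarrow> (\<exists>x\<in>verts d. B = {x, ptn b x} \<and> B \<in> b \<and> ?l x \<noteq> Circ \<and> ?l (ptn b x) \<noteq> Circ)
         \<or> (\<exists>x\<in>verts d. B = {x} \<and> ?l x = Circ)"
    unfolding sub_def using br_block[OF b] by fastforce
  have gS: "?S \<in> gen_brauer d"
    unfolding gen_brauer_def
  proof (rule CollectI, rule conjI; intro ballI)
    fix B assume "B \<in> ?S"
    from blocks[OF this] show "B \<subseteq> verts d \<and> (card B = 1 \<or> card B = 2)"
    proof
      assume "\<exists>x\<in>verts d. B = {x, ptn b x} \<and> B \<in> b \<and> ?l x \<noteq> Circ \<and> ?l (ptn b x) \<noteq> Circ"
      then obtain x where "x \<in> verts d" "B = {x, ptn b x}" by blast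
      thus ?thesis using ptn_verts[OF b, of x] ptn_props(1)[OF b, of x] by auto
    next
      assume "\<exists>x\<in>verts d. B = {x} \<and> ?l x = Circ"
      thus ?thesis by auto
    qed
  next
    fix x assume x: "x \<in> verts d"
    show "\<exists>!B. B \<in> ?S \<and> x \<in> B"
    proof (cases "?l x = Circ")
      case True
      have "{x} \<in> ?S" unfolding sub_def using x True by blast
      moreover have "\<And>B. B \<in> ?S \<Longrightarrow> x \<in> B \<Longrightarrow> B = {x}"
      proof -
        fix B assume "B \<in> ?S" "x \<in> B"
        then show "B = {x}" using True unfolding sub_def by auto
      qed
      ultimately show ?thesis by blast
    next
      case False
      have nc: "?l (ptn b x) \<noteq> Circ" using ok x False unfolding okb_def by blast
      have "{x, ptn b x} \<in> ?S" unfolding sub_def using ptn_props(2)[OF b x] False nc by auto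
      moreover have "\<And>B. B \<in> ?S \<Longrightarrow> x \<in> B \<Longrightarrow> B = {x, ptn b x}"
      proof -
        fix B assume B: "B \<in> ?S" "x \<in> B"
        show "B = {x, ptn b x}"
        proof (cases "B \<in> b")
          case True thus ?thesis using ptn_props(3)[OF b x] B by blast
        next
          case False
          then obtain z where "B = {z}" "?l z = Circ" using B(1) unfolding sub_def by blast
          thus ?thesis using B(2) \<open>?l x \<noteq> Circ\<close> by auto
        qed
      qed
      ultimately show ?thesis by blast
    qed
  qed
  have oS: "oriented t ?S s"
  proof (subst oriented_iff, intro ballI)
    fix B assume "B \<in> ?S"
    from blocks[OF this] show "oriented t {B} s"
    proof
      assume "\<exists>x\<in>verts d. B = {x, ptn b x} \<and> B \<in> b \<and> ?l x \<noteq> Circ \<and> ?l (ptn b x) \<noteq> Circ"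
      then obtain x where x: "x \<in> verts d" "B = {x, ptn b x}" "?l x \<noteq> Circ" "?l (ptn b x) \<noteq> Circ" by blast
      have "Wd t s x \<noteq> Wd t s (ptn b x)" using ok x unfolding okb_def by blast
      thus ?thesis using x oriented_pair[OF not_sym[OF ptn_props(1)[OF b x(1)]]] by simp
    next
      assume "\<exists>x\<in>verts d. B = {x} \<and> ?l x = Circ"
      thus ?thesis using oriented_single by auto
    qed
  qed
  show "?S \<in> hatB d s t" unfolding hatB_def using gS oS by blast
  show "subdiagram d ?S b" unfolding subdiagram_def
  proof (intro conjI gS ballI)
    fix B assume "B \<in> ?S"
    then show "\<exists>B0\<in>b. B \<subseteq> B0" unfolding sub_def using gb unfolding gen_brauer_def by blast
  qed
qed

lemma sub_unique:
  assumes b: "b \<in> brauer d" and h: "b' \<in> hatB d s t" and sd: "subdiagram d b' b"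
  shows "okb d b t s \<and> b' = sub d b (labv t s)"
proof -
  let ?l = "labv t s"
  have gb': "b' \<in> gen_brauer d" and or': "oriented t b' s" using h unfolding hatB_def by auto
  have refine: "\<And>B'. B' \<in> b' \<Longrightarrow> \<exists>B\<in>b. B' \<subseteq> B" using sd unfolding subdiagram_def by blast
  have key: "\<And>x B'. x \<in> verts d \<Longrightarrow> B' \<in> b' \<Longrightarrow> x \<in> B' \<Longrightarrow>
       (B' = {x} \<and> ?l x = Circ) \<or> (B' = {x, ptn b x} \<and> ?l x \<noteq> Circ \<and> ?l (ptn b x) \<noteq> Circ \<and> Wd t s x \<noteq> Wd t s (ptn b x))"
  proof -
    fix x B' assume x: "x \<in> verts d" and B': "B' \<in> b'" "x \<in> B'"
    obtain B where B: "B \<in> b" "B' \<subseteq> B" using refine[OF B'(1)] by blast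
    have "B = {x, ptn b x}" using ptn_props(3)[OF b x B(1)] B'(2) B(2) by blast
    hence "B' = {x} \<or> B' = {x, ptn b x}" using B(2) B'(2) by blast
    moreover have "oriented t {B'} s" using or' B'(1) oriented_iff[of t b' s] by blast
    ultimately show "?thesis x B'"
      using oriented_single oriented_pair[OF not_sym[OF ptn_props(1)[OF b x]]] by auto
  qed
  have blk: "\<And>x. x \<in> verts d \<Longrightarrow> \<exists>B'. B' \<in> b' \<and> x \<in> B'" using gb' unfolding gen_brauer_def by blast
  have uniq: "\<And>x B1 B2. x \<in> verts d \<Longrightarrow> B1 \<in> b' \<Longrightarrow> x \<in> B1 \<Longrightarrow> B2 \<in> b' \<Longrightarrow> x \<in> B2 \<Longrightarrow> B1 = B2"
    using gb' unfolding gen_brauer_def by blast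
  have ok: "okb d b t s"
    unfolding okb_def
  proof (intro ballI)
    fix x assume x: "x \<in> verts d"
    have px: "ptn b x \<in> verts d" by (rule ptn_verts[OF b x])
    obtain B' where B': "B' \<in> b'" "x \<in> B'" using blk[OF x] by blast
    show "(?l x = Circ) = (?l (ptn b x) = Circ) \<and> (?l x \<noteq> Circ \<longrightarrow> Wd t s x \<noteq> Wd t s (ptn b x))"
    proof (cases "B' = {x}")
      case True
      hence cx: "?l x = Circ" using key[OF x B'] ptn_props(1)[OF b x] by auto
      obtain B'' where B'': "B'' \<in> b'" "ptn b x \<in> B''" using blk[OF px] by blast
      have "x \<notin> B''" using uniq[OF x B' ] B'' True ptn_props(1)[OF b x] by blast
      hence "B'' = {ptn b x}" using key[OF px B''] ptn_ptn[OF b x] by auto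
      hence "?l (ptn b x) = Circ" using key[OF px B''] ptn_props(1)[OF b px] by auto
      thus ?thesis using cx by simp
    next
      case False thus ?thesis using key[OF x B'] by auto
    qed
  qed
  have "b' = sub d b ?l"
  proof (intro set_eqI iffI)
    fix B' assume B': "B' \<in> b'"
    have "B' \<noteq> {}" using gb' B' unfolding gen_brauer_def by fastforce
    then obtain x where xB: "x \<in> B'" by blast
    have x: "x \<in> verts d" using gb_sub[OF gb' B'] xB by blast
    from key[OF x B' xB] show "B' \<in> sub d b ?l"
      unfolding sub_def using x ptn_props(2)[OF b x] by auto
  next
    fix B assume "B \<in> sub d b ?l"
    then consider (a) "B \<in> b" "\<forall>x\<in>B. ?l x \<noteq> Circ" | (c) x where "x \<in> verts d" "?l x = Circ" "B = {x}"
      unfolding sub_def by blast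
    then show "B \<in> b'"
    proof cases
      case a
      obtain x where x: "x \<in> verts d" "B = {x, ptn b x}" using br_block[OF b a(1)] by blast
      obtain B' where B': "B' \<in> b'" "x \<in> B'" using blk[OF x(1)] by blast
      show ?thesis using key[OF x(1) B'] a(2) x(2) B' by auto
    next
      case c
      obtain B' where B': "B' \<in> b'" "x \<in> B'" using blk[OF c(1)] by blast
      show ?thesis using key[OF c(1) B'] c B' by auto
    qed
  qed
  thus ?thesis using ok by blast
qed

lemma Mb_eq:
  assumes b: "b \<in> brauer d"
  shows "Mb d b (t,s) = (if t \<in> oseq_hat d \<and> s \<in> oseq_hat d \<and> okb d b t s
     then bvec (sub d b (labv t s)) else (\<lambda>_. 0))"
proof -
  have ex: "(\<exists>b'. b' \<in> hatB d s t \<and> subdiagram d b' b) \<longleftrightarrow> okb d b t s"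
    using sub_ok[OF b] sub_unique[OF b] by blast
  have th: "okb d b t s \<Longrightarrow> (THE b'. b' \<in> hatB d s t \<and> subdiagram d b' b) = sub d b (labv t s)"
    using sub_ok[OF b] sub_unique[OF b] by (intro the_equality) auto
  show ?thesis unfolding Mb_def using ex th by auto
qed


definition Ed :: "('a\<Rightarrow>'a) \<Rightarrow> ('a\<Rightarrow>'a) \<Rightarrow> ('a\<times>'a) set" where
  "Ed A B = {(v, A v) | v. True} \<union> {(v, B v) | v. True}"

locale dih =
  fixes A B :: "'a \<Rightarrow> 'a" and L :: "'a set"
  assumes invA: "\<And>x. A (A x) = x" and invB: "\<And>x. B (B x) = x"
    and finL: "finite L" and AL: "\<And>x. x \<in> L \<Longrightarrow> A x \<in> L" and BL: "\<And>x. x \<in> L \<Longrightarrow> B x \<in> L"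
begin

definition tau where "tau = B \<circ> A"

lemma inj_tau: "inj tau"
  unfolding tau_def by (metis inj_def comp_apply invA invB)

lemma inj_taun: "inj (tau ^^ k)"
  using inj_tau by simp

lemma tau_L: "x \<in> L \<Longrightarrow> (tau ^^ k) x \<in> L"
  by (induction k) (auto simp: tau_def AL BL)

lemma period_ex: assumes "x \<in> L" shows "\<exists>n>0. (tau ^^ n) x = x"
proof -
  have "{y. \<exists>n. y = (tau ^^ n) x} \<subseteq> L" using tau_L[OF assms] by auto
  hence "finite {y. \<exists>n. y = (tau ^^ n) x}" using finL finite_subset by blast
  from funpow_inj_finite[OF inj_tau this] show ?thesis by metis
qed

lemma tauA_tau: "tau (A (tau z)) = A z"
  unfolding tau_def by (simp add: invA invB)

lemma taun_A_taun: "(tau ^^ k) (A ((tau ^^ k) y)) = A y"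
proof (induction k arbitrary: y)
  case (Suc k)
  have "(tau ^^ Suc k) (A ((tau ^^ Suc k) y)) = (tau ^^ k) (tau (A (tau ((tau ^^ k) y))))"
    by (simp add: funpow_swap1)
  also have "\<dots> = (tau ^^ k) (A ((tau ^^ k) y))" by (simp add: tauA_tau)
  finally show ?case using Suc by simp
qed simp

lemma B_eq: "B z = tau (A z)"
  unfolding tau_def by (simp add: invA)

lemma tau_AB: "tau (A (B z)) = z"
  unfolding tau_def by (simp add: invA invB)

lemma taun_inj_eq: "(tau ^^ k) a = (tau ^^ k) b \<longleftrightarrow> a = b"
  using inj_taun[of k] by (auto dest: injD)

lemma tau_inj_eq: "tau a = tau b \<longleftrightarrow> a = b"
  using inj_tau by (auto dest: injD)

lemma AB_orbit:
  assumes "0 < n" "(tau ^^ n) x = x"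
  shows "A (B ((tau ^^ k) x)) = (tau ^^ (n - 1 + k)) x"
proof -
  have "tau ((tau ^^ (n - 1 + k)) x) = (tau ^^ Suc (n - 1 + k)) x" by simp
  also have "Suc (n - 1 + k) = k + n" using assms(1) by simp
  also have "(tau ^^ (k + n)) x = (tau ^^ k) ((tau ^^ n) x)" by (simp add: funpow_add)
  finally have "tau ((tau ^^ (n - 1 + k)) x) = (tau ^^ k) ((tau ^^ n) x)" .
  hence "tau ((tau ^^ (n - 1 + k)) x) = (tau ^^ k) x" using assms(2) by simp
  thus ?thesis using tau_AB[of "(tau ^^ k) x"] tau_inj_eq by metis
qed

lemma Ed_sym: "(a,b) \<in> Ed A B \<Longrightarrow> (b,a) \<in> Ed A B"
proof -
  assume "(a,b) \<in> Ed A B"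
  hence "b = A a \<or> b = B a" unfolding Ed_def by auto
  hence "a = A b \<or> a = B b" using invA invB by auto
  thus "(b,a) \<in> Ed A B" unfolding Ed_def by auto
qed

lemma Ed_rtrancl_sym: "(a,b) \<in> (Ed A B)\<^sup>* \<Longrightarrow> (b,a) \<in> (Ed A B)\<^sup>*"
proof (induction rule: rtrancl_induct)
  case (step y z) thus ?case using Ed_sym by (meson converse_rtrancl_into_rtrancl)
qed simp

lemma reach_tau: "(x, (tau ^^ k) x) \<in> (Ed A B)\<^sup>*"
proof (induction k)
  case (Suc k)
  let ?z = "(tau ^^ k) x"
  have "(?z, A ?z) \<in> Ed A B" "(A ?z, B (A ?z)) \<in> Ed A B" unfolding Ed_def by auto
  hence "(?z, tau ?z) \<in> (Ed A B)\<^sup>*" unfolding tau_def by auto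
  thus ?case using Suc by (simp add: rtrancl_trans)
qed simp

lemma reach_Atau: "(x, A ((tau ^^ k) x)) \<in> (Ed A B)\<^sup>*"
proof -
  have "((tau ^^ k) x, A ((tau ^^ k) x)) \<in> Ed A B" unfolding Ed_def by auto
  thus ?thesis using reach_tau by (meson rtrancl.rtrancl_into_rtrancl)
qed

lemma comp_char:
  assumes x: "x \<in> L"
  shows "(x, v) \<in> (Ed A B)\<^sup>* \<longleftrightarrow> (\<exists>k. v = (tau ^^ k) x \<or> v = A ((tau ^^ k) x))"
proof
  assume "\<exists>k. v = (tau ^^ k) x \<or> v = A ((tau ^^ k) x)"
  thus "(x, v) \<in> (Ed A B)\<^sup>*" using reach_tau reach_Atau by blast
next
  obtain n where n: "0 < n" "(tau ^^ n) x = x" using period_ex[OF x] by blast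
  assume "(x, v) \<in> (Ed A B)\<^sup>*"
  thus "\<exists>k. v = (tau ^^ k) x \<or> v = A ((tau ^^ k) x)"
  proof (induction rule: rtrancl_induct)
    case base show ?case by (rule exI[of _ 0]) simp
  next
    case (step y z)
    from step.IH obtain k where k: "y = (tau ^^ k) x \<or> y = A ((tau ^^ k) x)" by blast
    from step.hyps(2) have "z = A y \<or> z = B y" unfolding Ed_def by auto
    thus ?case
    proof
      assume "z = A y" thus ?thesis using k invA by metis
    next
      assume zB: "z = B y"
      show ?thesis using k
      proof
        assume "y = (tau ^^ k) x"
        hence "z = A (A (B ((tau ^^ k) x)))" using zB invA by simp
        thus ?thesis using AB_orbit[OF n] by metis
      next
        assume "y = A ((tau ^^ k) x)"
        hence "z = (tau ^^ Suc k) x" using zB by (simp add: tau_def)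
        thus ?thesis by blast
      qed
    qed
  qed
qed


lemma arA: "k < n \<Longrightarrow> n - 1 - k \<noteq> k \<Longrightarrow> ((n - 1) div 2 < n - 1 - k) \<noteq> ((n - 1) div 2 < (k::nat))"
  by presburger
lemma arB: "k < n \<Longrightarrow> 0 < k \<Longrightarrow> n - k \<noteq> k \<Longrightarrow> ((n - 1) div 2 < n - k) \<noteq> ((n - 1) div 2 < (k::nat))"
  by presburger
lemma arC: "0 < n \<Longrightarrow> ((n - 1) div 2 < n div 2) \<longleftrightarrow> even (n::nat)"
  by presburger
lemma arD: "k < (n::nat) \<Longrightarrow> n - 1 - k = k \<Longrightarrow> k = n div 2" by presburger
lemma arE: "k < (n::nat) \<Longrightarrow> n - k = k \<Longrightarrow> k = n div 2" by presburger

definition per where "per x = (LEAST n. 0 < n \<and> (tau ^^ n) x = x)"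

lemma per: "x \<in> L \<Longrightarrow> 0 < per x \<and> (tau ^^ per x) x = x"
  unfolding per_def using period_ex by (rule LeastI_ex)

lemma per_min: "0 < m \<Longrightarrow> m < per x \<Longrightarrow> (tau ^^ m) x \<noteq> x"
  unfolding per_def using not_less_Least by blast

lemma per_distinct:
  assumes "i < per x" "j < per x" "(tau ^^ i) x = (tau ^^ j) x"
  shows "i = j"
proof (rule ccontr)
  assume ne: "i \<noteq> j"
  { fix i j assume ij: "i < j" "j < per x" "(tau ^^ i) x = (tau ^^ j) x"
    have "(tau ^^ j) x = (tau ^^ i) ((tau ^^ (j - i)) x)"
      using ij(1) by (simp add: funpow_add[symmetric, THEN fun_cong, simplified comp_apply])
    hence "(tau ^^ (j - i)) x = x" using ij(3) taun_inj_eq by metis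
    moreover have "0 < j - i" "j - i < per x" using ij by auto
    ultimately have False using per_min by blast }
  thus False using assms ne by (metis linorder_neqE_nat)
qed

context
  fixes x assumes xL: "x \<in> L" and Bx: "B x = x" and Ax: "A x \<noteq> x"
begin

abbreviation "n \<equiv> per x"

lemma n_ge2: "2 \<le> n"
proof (rule ccontr)
  assume "\<not> 2 \<le> n"
  hence "n = 1" using per[OF xL] by auto
  hence "tau x = x" using per[OF xL] by simp
  hence "B (A x) = x" by (simp add: tau_def)
  hence "A x = B x" using invB by metis
  thus False using Bx Ax by simp
qed

lemma A_end: assumes "k < n" shows "A ((tau ^^ k) x) = (tau ^^ (n - 1 - k)) x"
proof -
  have pp: "0 < n" "(tau ^^ n) x = x" using per[OF xL] by auto
  have "A x = (tau ^^ (n - 1)) x" using AB_orbit[OF pp, of 0] Bx by simp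
  moreover have "(tau ^^ (n - 1)) x = (tau ^^ k) ((tau ^^ (n - 1 - k)) x)"
    using assms by (simp add: funpow_add[symmetric, THEN fun_cong, simplified comp_apply])
  ultimately have "(tau ^^ k) (A ((tau ^^ k) x)) = (tau ^^ k) ((tau ^^ (n - 1 - k)) x)"
    using taun_A_taun by simp
  thus ?thesis using taun_inj_eq by blast
qed

lemma B_end: assumes "k < n" shows "B ((tau ^^ k) x) = (tau ^^ (n - k)) x"
proof -
  have "B ((tau ^^ k) x) = tau ((tau ^^ (n - 1 - k)) x)" using B_eq A_end[OF assms] by simp
  also have "\<dots> = (tau ^^ Suc (n - 1 - k)) x" by simp
  also have "Suc (n - 1 - k) = n - k" using assms by simp
  finally show ?thesis .
qed

lemma comp_end: "(x, v) \<in> (Ed A B)\<^sup>* \<longleftrightarrow> (\<exists>k<n. v = (tau ^^ k) x)"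
proof
  assume "\<exists>k<n. v = (tau ^^ k) x" thus "(x, v) \<in> (Ed A B)\<^sup>*" using reach_tau by blast
next
  assume "(x, v) \<in> (Ed A B)\<^sup>*"
  then obtain k where k: "v = (tau ^^ k) x \<or> v = A ((tau ^^ k) x)" using comp_char[OF xL] by blast
  have pn: "0 < n" "(tau ^^ n) x = x" using per[OF xL] by auto
  have km: "(tau ^^ k) x = (tau ^^ (k mod n)) x" using funpow_mod_eq[OF pn(2), of k] by simp
  have kl: "k mod n < n" using pn by simp
  from k show "\<exists>k<n. v = (tau ^^ k) x"
  proof
    assume "v = (tau ^^ k) x" thus ?thesis using km kl by blast
  next
    assume "v = A ((tau ^^ k) x)"
    hence "v = (tau ^^ (n - 1 - k mod n)) x" using km A_end[OF kl] by simp
    moreover have "n - 1 - k mod n < n" using pn by simp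
    ultimately show ?thesis by blast
  qed
qed

definition colE where "colE v = (\<exists>k. (n - 1) div 2 < k \<and> k < n \<and> v = (tau ^^ k) x)"

lemma colE_tau: "j < n \<Longrightarrow> colE ((tau ^^ j) x) \<longleftrightarrow> (n - 1) div 2 < j"
  unfolding colE_def using per_distinct by blast

lemma end_case:
  "\<exists>y (w::'a\<Rightarrow>bool). y \<noteq> x \<and> (x, y) \<in> (Ed A B)\<^sup>* \<and> {v. (x, v) \<in> (Ed A B)\<^sup>* \<and> (A v = v \<or> B v = v)} = {x, y}
     \<and> (\<forall>v. (x, v) \<in> (Ed A B)\<^sup>* \<longrightarrow> \<not> (A v = v \<and> B v = v))
     \<and> (\<forall>v. (x, v) \<in> (Ed A B)\<^sup>* \<longrightarrow> (A v \<noteq> v \<longrightarrow> w (A v) \<noteq> w v) \<and> (B v \<noteq> v \<longrightarrow> w (B v) \<noteq> w v))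
     \<and> (w y \<noteq> w x \<longleftrightarrow> B y = y)"
proof -
  have n2: "2 \<le> n" by (rule n_ge2)
  define h where "h = n div 2"
  have hn: "h < n" "0 < h" using n2 unfolding h_def by auto
  define y where "y = (tau ^^ h) x"
  have x0: "x = (tau ^^ 0) x" by simp
  have pp: "0 < n" "(tau ^^ n) x = x" using per[OF xL] by auto
  have yx: "y \<noteq> x"
  proof
    assume "y = x" hence "(tau ^^ h) x = (tau ^^ 0) x" unfolding y_def by simp
    from per_distinct[OF hn(1) _ this] pp(1) hn(2) show False by simp
  qed
  have xy: "(x, y) \<in> (Ed A B)\<^sup>*" using comp_end hn unfolding y_def by blast
  have Ay: "A y = y \<longleftrightarrow> odd n"
  proof -
    have "A y = (tau ^^ (n - 1 - h)) x" using A_end[OF hn(1)] unfolding y_def .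
    moreover have lt: "n - 1 - h < n" using pp by simp
    ultimately have "A y = y \<longleftrightarrow> n - 1 - h = h" using per_distinct[OF lt hn(1)] unfolding y_def by auto
    moreover have "\<And>m::nat. 0 < m \<Longrightarrow> (m - 1 - m div 2 = m div 2) \<longleftrightarrow> odd m" by presburger
    ultimately show ?thesis using pp(1) unfolding h_def by blast
  qed
  have By: "B y = y \<longleftrightarrow> even n"
  proof -
    have "B y = (tau ^^ (n - h)) x" using B_end[OF hn(1)] unfolding y_def .
    moreover have "n - h < n" using hn by simp
    ultimately have "B y = y \<longleftrightarrow> n - h = h" using per_distinct[OF _ hn(1), of "n - h"] unfolding y_def by auto
    moreover have "\<And>m::nat. (m - m div 2 = m div 2) \<longleftrightarrow> even m" by presburger
    ultimately show ?thesis unfolding h_def by blast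
  qed
  have ends: "{v. (x, v) \<in> (Ed A B)\<^sup>* \<and> (A v = v \<or> B v = v)} = {x, y}"
  proof (intro set_eqI iffI)
    fix v assume "v \<in> {v. (x, v) \<in> (Ed A B)\<^sup>* \<and> (A v = v \<or> B v = v)}"
    then obtain k where k: "k < n" "v = (tau ^^ k) x" and f: "A v = v \<or> B v = v" using comp_end by blast
    have "k = 0 \<or> k = h"
    proof (cases "A v = v")
      case True
      hence "(tau ^^ (n - 1 - k)) x = (tau ^^ k) x" using A_end[OF k(1)] k(2) by simp
      moreover have "n - 1 - k < n" using k(1) by simp
      ultimately have "n - 1 - k = k" using per_distinct k(1) by blast
      thus ?thesis unfolding h_def using arD k(1) by blast
    next
      case False
      hence "B v = v" using f by blast
      hence e: "(tau ^^ (n - k)) x = (tau ^^ k) x" using B_end[OF k(1)] k(2) by simp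
      show ?thesis
      proof (cases "k = 0")
        case False
        hence "n - k = k" using per_distinct[OF _ k(1) e] k by simp
        thus ?thesis unfolding h_def using arE k(1) by blast
      qed simp
    qed
    thus "v \<in> {x, y}" using k(2) unfolding y_def by auto
  next
    fix v assume "v \<in> {x, y}"
    thus "v \<in> {v. (x, v) \<in> (Ed A B)\<^sup>* \<and> (A v = v \<or> B v = v)}"
      using xy Bx Ay By by auto
  qed
  have notboth: "\<forall>v. (x, v) \<in> (Ed A B)\<^sup>* \<longrightarrow> \<not> (A v = v \<and> B v = v)"
  proof (intro allI impI notI)
    fix v assume "(x, v) \<in> (Ed A B)\<^sup>*" "A v = v \<and> B v = v"
    hence "v \<in> {x, y}" using ends by blast
    thus False using Ax Ay By \<open>A v = v \<and> B v = v\<close> by auto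
  qed
  have proper: "\<forall>v. (x, v) \<in> (Ed A B)\<^sup>* \<longrightarrow> (A v \<noteq> v \<longrightarrow> colE (A v) \<noteq> colE v) \<and> (B v \<noteq> v \<longrightarrow> colE (B v) \<noteq> colE v)"
  proof (intro allI impI conjI)
    fix v assume "(x, v) \<in> (Ed A B)\<^sup>*"
    then obtain k where k: "k < n" "v = (tau ^^ k) x" using comp_end by blast
    { assume "A v \<noteq> v"
      hence ne: "n - 1 - k \<noteq> k" using A_end[OF k(1)] k(2) by auto
      have "colE (A v) = ((n - 1) div 2 < n - 1 - k)" using A_end[OF k(1)] k colE_tau[of "n - 1 - k"] by simp
      moreover have "colE v = ((n - 1) div 2 < k)" using colE_tau[OF k(1)] k(2) by simp
      ultimately show "colE (A v) \<noteq> colE v" using arA[OF k(1) ne] by simp }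
    { assume Bv: "B v \<noteq> v"
      have k0: "k \<noteq> 0"
      proof
        assume "k = 0" thus False using Bv k(2) Bx by simp
      qed
      hence ne: "n - k \<noteq> k" using B_end[OF k(1)] k(2) Bv by auto
      have "n - k < n" using k0 k(1) by simp
      hence "colE (B v) = ((n - 1) div 2 < n - k)" using B_end[OF k(1)] k colE_tau[of "n - k"] by simp
      moreover have "colE v = ((n - 1) div 2 < k)" using colE_tau[OF k(1)] k(2) by simp
      ultimately show "colE (B v) \<noteq> colE v" using arB[OF k(1) _ ne] k0 by simp }
  qed
  have cx: "\<not> colE x" using colE_tau[of 0] per[OF xL] by simp
  have cy: "colE y \<longleftrightarrow> even n" using colE_tau[OF hn(1)] arC[OF pp(1)] unfolding y_def h_def by simp
  have last: "colE y \<noteq> colE x \<longleftrightarrow> B y = y" using cx cy By by simp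
  show ?thesis
    apply (rule exI[where x=y], rule exI[where x=colE])
    apply (intro conjI)
    apply (rule yx)
    apply (rule xy)
    apply (rule ends)
    apply (rule notboth)
    apply (rule proper)
    apply (rule last)
    done
qed

end

lemma loop_case:
  assumes xL: "x \<in> L" and nf: "\<forall>v. (x, v) \<in> (Ed A B)\<^sup>* \<longrightarrow> A v \<noteq> v \<and> B v \<noteq> v"
  shows "\<exists>w::'a\<Rightarrow>bool. \<forall>v. (x, v) \<in> (Ed A B)\<^sup>* \<longrightarrow> w (A v) \<noteq> w v \<and> w (B v) \<noteq> w v"
proof -
  obtain n where n: "0 < n" "(tau ^^ n) x = x" using period_ex[OF xL] by blast
  have disj: "(tau ^^ j) x \<noteq> A ((tau ^^ k) x)" for j k
  proof
    assume e: "(tau ^^ j) x = A ((tau ^^ k) x)"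
    have "(tau ^^ (k + j)) x = (tau ^^ k) (A ((tau ^^ k) x))"
      using e by (simp add: funpow_add)
    hence e2: "(tau ^^ (k + j)) x = A x" using taun_A_taun by simp
    define c where "c = (k + j) div 2"
    show False
    proof (cases "even (k + j)")
      case True
      hence "k + j = c + c" unfolding c_def by presburger
      hence "(tau ^^ (k + j)) x = (tau ^^ c) ((tau ^^ c) x)" by (simp only: funpow_add comp_apply)
      hence "(tau ^^ c) ((tau ^^ c) x) = (tau ^^ c) (A ((tau ^^ c) x))"
        using e2 taun_A_taun by simp
      hence "A ((tau ^^ c) x) = (tau ^^ c) x" using taun_inj_eq by simp
      thus False using nf reach_tau by blast
    next
      case False
      hence "k + j = c + Suc c" unfolding c_def by presburger
      hence "(tau ^^ (k + j)) x = (tau ^^ c) ((tau ^^ Suc c) x)" by (simp only: funpow_add comp_apply)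
      hence "(tau ^^ c) ((tau ^^ Suc c) x) = (tau ^^ c) (A ((tau ^^ c) x))"
        using e2 taun_A_taun by simp
      hence "(tau ^^ Suc c) x = A ((tau ^^ c) x)" using taun_inj_eq by simp
      hence "B (A ((tau ^^ c) x)) = A ((tau ^^ c) x)" by (simp add: tau_def)
      thus False using nf reach_Atau by blast
    qed
  qed
  define w where "w v = (\<exists>k. v = A ((tau ^^ k) x))" for v
  have "\<forall>v. (x, v) \<in> (Ed A B)\<^sup>* \<longrightarrow> w (A v) \<noteq> w v \<and> w (B v) \<noteq> w v"
  proof (intro allI impI)
    fix v assume "(x, v) \<in> (Ed A B)\<^sup>*"
    then obtain k where k: "v = (tau ^^ k) x \<or> v = A ((tau ^^ k) x)" using comp_char[OF xL] by blast
    thus "w (A v) \<noteq> w v \<and> w (B v) \<noteq> w v"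
    proof
      assume v: "v = (tau ^^ k) x"
      have "A (B v) = (tau ^^ (n - 1 + k)) x" using AB_orbit[OF n, of k] v by simp
      hence "A (A (B v)) = A ((tau ^^ (n - 1 + k)) x)" by simp
      hence "B v = A ((tau ^^ (n - 1 + k)) x)" using invA by simp
      hence "w (B v)" "w (A v)" unfolding w_def using v by auto
      moreover have "\<not> w v" unfolding w_def using v disj[of k] by auto
      ultimately show ?thesis by blast
    next
      assume v: "v = A ((tau ^^ k) x)"
      have "B v = (tau ^^ Suc k) x" using v by (simp add: tau_def)
      have "\<not> w (B v)"
      proof
        assume "w (B v)" then obtain j where "B v = A ((tau ^^ j) x)" unfolding w_def by blast
        thus False using \<open>B v = (tau ^^ Suc k) x\<close> disj[of "Suc k" j] by simp
      qed
      moreover have "\<not> w (A v)"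
      proof
        assume "w (A v)" then obtain j where "A v = A ((tau ^^ j) x)" unfolding w_def by blast
        hence "(tau ^^ k) x = A ((tau ^^ j) x)" using v invA by simp
        thus False using disj[of k j] by simp
      qed
      moreover have "w v" unfolding w_def using v by auto
      ultimately show ?thesis by blast
    qed
  qed
  note W = this
  show ?thesis apply (rule exI[where x=w]) by (rule W)
qed

end


definition M1 :: "nat \<Rightarrow> diag \<Rightarrow> lvl \<Rightarrow> lvl" where
 "M1 d b v = (case v of Top i \<Rightarrow> if i < d then up_v (ptn b (Inl i)) else v
            | Mid j \<Rightarrow> if j < d then up_v (ptn b (Inr j)) else v | Bot k \<Rightarrow> v)"

definition M2 :: "nat \<Rightarrow> diag \<Rightarrow> lvl \<Rightarrow> lvl" where
 "M2 d b v = (case v of Top i \<Rightarrow> v | Mid j \<Rightarrow> if j < d then lo_v (ptn b (Inl j)) else v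
            | Bot k \<Rightarrow> if k < d then lo_v (ptn b (Inr k)) else v)"

definition Lv :: "nat \<Rightarrow> lvl set" where
  "Lv d = {Top i|i. i<d} \<union> {Mid i|i. i<d} \<union> {Bot i|i. i<d}"

definition outer :: "lvl \<Rightarrow> bool" where
  "outer v = (case v of Mid _ \<Rightarrow> False | _ \<Rightarrow> True)"

definition istop :: "lvl \<Rightarrow> bool" where
  "istop v = (case v of Top _ \<Rightarrow> True | _ \<Rightarrow> False)"

lemma verts_iff: "x \<in> verts d \<longleftrightarrow> (case x of Inl i \<Rightarrow> i < d | Inr i \<Rightarrow> i < d)"
  unfolding verts_def by (cases x) auto

lemma up_v_inj: "up_v x = up_v y \<longleftrightarrow> x = y"
  unfolding up_v_def by (cases x; cases y) auto
lemma lo_v_inj: "lo_v x = lo_v y \<longleftrightarrow> x = y"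
  unfolding lo_v_def by (cases x; cases y) auto
lemma outer_v_inj: "outer_v x = outer_v y \<longleftrightarrow> x = y"
  unfolding outer_v_def by (cases x; cases y) auto

lemma M1_up: "x \<in> verts d \<Longrightarrow> M1 d b (up_v x) = up_v (ptn b x)"
  unfolding M1_def up_v_def by (cases x) (auto simp: verts_iff)
lemma M2_lo: "x \<in> verts d \<Longrightarrow> M2 d b (lo_v x) = lo_v (ptn b x)"
  unfolding M2_def lo_v_def by (cases x) (auto simp: verts_iff)

lemma up_img: "v \<in> up_v ` verts d \<longleftrightarrow> (\<exists>i<d. v = Top i \<or> v = Mid i)"
proof
  assume "v \<in> up_v ` verts d" then obtain x where "x \<in> verts d" "v = up_v x" by blast
  thus "\<exists>i<d. v = Top i \<or> v = Mid i" by (cases x) (auto simp: up_v_def verts_iff)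
next
  assume "\<exists>i<d. v = Top i \<or> v = Mid i"
  then obtain i where i: "i < d" "v = Top i \<or> v = Mid i" by blast
  thus "v \<in> up_v ` verts d"
  proof (elim disjE)
    assume "v = Top i" thus ?thesis using i(1) by (intro image_eqI[of _ _ "Inl i"]) (auto simp: up_v_def verts_iff)
  next
    assume "v = Mid i" thus ?thesis using i(1) by (intro image_eqI[of _ _ "Inr i"]) (auto simp: up_v_def verts_iff)
  qed
qed
lemma lo_img: "v \<in> lo_v ` verts d \<longleftrightarrow> (\<exists>i<d. v = Mid i \<or> v = Bot i)"
proof
  assume "v \<in> lo_v ` verts d" then obtain x where "x \<in> verts d" "v = lo_v x" by blast
  thus "\<exists>i<d. v = Mid i \<or> v = Bot i" by (cases x) (auto simp: lo_v_def verts_iff)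
next
  assume "\<exists>i<d. v = Mid i \<or> v = Bot i"
  then obtain i where i: "i < d" "v = Mid i \<or> v = Bot i" by blast
  thus "v \<in> lo_v ` verts d"
  proof (elim disjE)
    assume "v = Mid i" thus ?thesis using i(1) by (intro image_eqI[of _ _ "Inl i"]) (auto simp: lo_v_def verts_iff)
  next
    assume "v = Bot i" thus ?thesis using i(1) by (intro image_eqI[of _ _ "Inr i"]) (auto simp: lo_v_def verts_iff)
  qed
qed

lemma M1_other: "v \<notin> up_v ` verts d \<Longrightarrow> M1 d b v = v"
  unfolding up_img M1_def by (cases v) auto
lemma M2_other: "v \<notin> lo_v ` verts d \<Longrightarrow> M2 d b v = v"
  unfolding lo_img M2_def by (cases v) auto

lemma up_v_verts_L: "x \<in> verts d \<Longrightarrow> up_v x \<in> Lv d"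
  unfolding up_v_def Lv_def by (cases x) (auto simp: verts_iff)
lemma lo_v_verts_L: "x \<in> verts d \<Longrightarrow> lo_v x \<in> Lv d"
  unfolding lo_v_def Lv_def by (cases x) (auto simp: verts_iff)
lemma outer_v_verts_L: "x \<in> verts d \<Longrightarrow> outer_v x \<in> Lv d"
  unfolding outer_v_def Lv_def by (cases x) (auto simp: verts_iff)

lemma M1_inv: assumes b: "b \<in> brauer d" shows "M1 d b (M1 d b v) = v"
proof (cases "v \<in> up_v ` verts d")
  case True
  then obtain x where x: "x \<in> verts d" "v = up_v x" by blast
  show ?thesis using x M1_up ptn_verts[OF b x(1)] ptn_ptn[OF b x(1)] by simp
next
  case False thus ?thesis using M1_other by simp
qed

lemma M2_inv: assumes b: "b \<in> brauer d" shows "M2 d b (M2 d b v) = v"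
proof (cases "v \<in> lo_v ` verts d")
  case True
  then obtain x where x: "x \<in> verts d" "v = lo_v x" by blast
  show ?thesis using x M2_lo ptn_verts[OF b x(1)] ptn_ptn[OF b x(1)] by simp
next
  case False thus ?thesis using M2_other by simp
qed

lemma Lv_cases: "v \<in> Lv d \<Longrightarrow> (v \<in> up_v ` verts d \<and> v \<in> lo_v ` verts d \<and> \<not> istop v \<and> \<not> outer v) \<or>
   (v \<in> up_v ` verts d \<and> v \<notin> lo_v ` verts d \<and> istop v \<and> outer v) \<or>
   (v \<notin> up_v ` verts d \<and> v \<in> lo_v ` verts d \<and> \<not> istop v \<and> outer v)"
  unfolding Lv_def up_img lo_img istop_def outer_def by auto

lemma M1_L: assumes b: "b \<in> brauer d" shows "v \<in> Lv d \<Longrightarrow> M1 d b v \<in> Lv d"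
  by (cases "v \<in> up_v ` verts d") (auto simp: M1_up M1_other ptn_verts[OF b] up_v_verts_L)
lemma M2_L: assumes b: "b \<in> brauer d" shows "v \<in> Lv d \<Longrightarrow> M2 d b v \<in> Lv d"
  by (cases "v \<in> lo_v ` verts d") (auto simp: M2_lo M2_other ptn_verts[OF b] lo_v_verts_L)

lemma M1_moves: assumes b: "b \<in> brauer d" shows "v \<in> up_v ` verts d \<Longrightarrow> M1 d b v \<noteq> v"
  using ptn_props(1)[OF b] by (auto simp: M1_up up_v_inj)
lemma M2_moves: assumes b: "b \<in> brauer d" shows "v \<in> lo_v ` verts d \<Longrightarrow> M2 d b v \<noteq> v"
  using ptn_props(1)[OF b] by (auto simp: M2_lo lo_v_inj)

lemma finite_Lv: "finite (Lv d)"
  unfolding Lv_def by auto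

lemma dih_inst: assumes b1: "b1 \<in> brauer d" and b2: "b2 \<in> brauer d"
  shows "dih (M1 d b1) (M2 d b2) (Lv d)" "dih (M2 d b2) (M1 d b1) (Lv d)"
  by (unfold_locales; simp add: M1_inv[OF b1] M2_inv[OF b2] M1_L[OF b1] M2_L[OF b2] finite_Lv)+

lemma Ed_comm: "Ed A B = Ed B A"
  unfolding Ed_def by (rule Un_commute)

lemma Ed_iff: "(a, c) \<in> Ed A B \<longleftrightarrow> c = A a \<or> c = B a"
  unfolding Ed_def by auto

lemma stack_rel_iff: "p \<in> stack_rel b1 b2 \<longleftrightarrow>
   (\<exists>x y. p = (up_v x, up_v y) \<and> (\<exists>B\<in>b1. x \<in> B \<and> y \<in> B)) \<or>
   (\<exists>x y. p = (lo_v x, lo_v y) \<and> (\<exists>B\<in>b2. x \<in> B \<and> y \<in> B))"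
  unfolding stack_rel_def by blast

lemma stack_rel_eq:
  assumes b1: "b1 \<in> brauer d" and b2: "b2 \<in> brauer d"
  shows "(stack_rel b1 b2)\<^sup>* = (Ed (M1 d b1) (M2 d b2))\<^sup>*"
proof
  let ?E = "Ed (M1 d b1) (M2 d b2)"
  have "stack_rel b1 b2 \<subseteq> ?E\<^sup>*"
  proof
    fix p assume "p \<in> stack_rel b1 b2"
    then consider (u) x y B where "p = (up_v x, up_v y)" "B \<in> b1" "x \<in> B" "y \<in> B"
      | (l) x y B where "p = (lo_v x, lo_v y)" "B \<in> b2" "x \<in> B" "y \<in> B"
      unfolding stack_rel_iff by blast
    then show "p \<in> ?E\<^sup>*"
    proof cases
      case u
      have x: "x \<in> verts d" using gb_sub[OF br_gb[OF b1] u(2)] u(3) by blast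
      have "B = {x, ptn b1 x}" using ptn_props(3)[OF b1 x u(2) u(3)] .
      hence "y = x \<or> y = ptn b1 x" using u(4) by blast
      thus ?thesis
      proof
        assume "y = x" thus ?thesis using u(1) by simp
      next
        assume "y = ptn b1 x"
        hence "p = (up_v x, M1 d b1 (up_v x))" using u(1) M1_up[OF x] by simp
        hence "p \<in> ?E" unfolding Ed_def by blast
        thus ?thesis by (rule r_into_rtrancl)
      qed
    next
      case l
      have x: "x \<in> verts d" using gb_sub[OF br_gb[OF b2] l(2)] l(3) by blast
      have "B = {x, ptn b2 x}" using ptn_props(3)[OF b2 x l(2) l(3)] .
      hence "y = x \<or> y = ptn b2 x" using l(4) by blast
      thus ?thesis
      proof
        assume "y = x" thus ?thesis using l(1) by simp
      next
        assume "y = ptn b2 x"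
        hence "p = (lo_v x, M2 d b2 (lo_v x))" using l(1) M2_lo[OF x] by simp
        hence "p \<in> ?E" unfolding Ed_def by blast
        thus ?thesis by (rule r_into_rtrancl)
      qed
    qed
  qed
  thus "(stack_rel b1 b2)\<^sup>* \<subseteq> ?E\<^sup>*" by (rule rtrancl_subset_rtrancl)
  have "?E \<subseteq> (stack_rel b1 b2)\<^sup>*"
  proof (rule subrelI)
    fix v c assume "(v, c) \<in> ?E"
    hence "c = M1 d b1 v \<or> c = M2 d b2 v" by (simp add: Ed_iff)
    thus "(v, c) \<in> (stack_rel b1 b2)\<^sup>*"
    proof
      assume p: "c = M1 d b1 v"
      show ?thesis
      proof (cases "v \<in> up_v ` verts d")
        case True
        then obtain x where x: "x \<in> verts d" "v = up_v x" by blast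
        have "(up_v x, up_v (ptn b1 x)) \<in> stack_rel b1 b2"
          unfolding stack_rel_def using ptn_props(2)[OF b1 x(1)] by (intro UnI1 CollectI exI conjI) (rule refl, blast)
        moreover have "c = up_v (ptn b1 x)" using p x M1_up by simp
        ultimately show ?thesis using x(2) by simp
      next
        case False thus ?thesis using p M1_other by simp
      qed
    next
      assume p: "c = M2 d b2 v"
      show ?thesis
      proof (cases "v \<in> lo_v ` verts d")
        case True
        then obtain x where x: "x \<in> verts d" "v = lo_v x" by blast
        have "(lo_v x, lo_v (ptn b2 x)) \<in> stack_rel b1 b2"
          unfolding stack_rel_def using ptn_props(2)[OF b2 x(1)] by (intro UnI2 CollectI exI conjI) (rule refl, blast)
        moreover have "c = lo_v (ptn b2 x)" using p x M2_lo by simp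
        ultimately show ?thesis using x(2) by simp
      next
        case False thus ?thesis using p M2_other by simp
      qed
    qed
  qed
  thus "?E\<^sup>* \<subseteq> (stack_rel b1 b2)\<^sup>*" by (rule rtrancl_subset_rtrancl)
qed


context
  fixes d :: nat and b1 b2 :: diag
  assumes b1: "b1 \<in> brauer d" and b2: "b2 \<in> brauer d"
begin

abbreviation "EE \<equiv> Ed (M1 d b1) (M2 d b2)"

lemma D1: "dih (M1 d b1) (M2 d b2) (Lv d)" using dih_inst[OF b1 b2] by blast
lemma D2: "dih (M2 d b2) (M1 d b1) (Lv d)" using dih_inst[OF b1 b2] by blast

lemma EE_sym: "(a, c) \<in> EE\<^sup>* \<Longrightarrow> (c, a) \<in> EE\<^sup>*"
  using dih.Ed_rtrancl_sym[OF D1] .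

lemma EE_L: assumes "(a, c) \<in> EE\<^sup>*" "a \<in> Lv d" shows "c \<in> Lv d"
  using assms
proof (induction rule: rtrancl_induct)
  case (step y z)
  hence "z = M1 d b1 y \<or> z = M2 d b2 y" by (simp add: Ed_iff)
  thus ?case using step M1_L[OF b1] M2_L[OF b2] by auto
qed

lemma fixM2: "z \<in> Lv d \<Longrightarrow> M2 d b2 z = z \<longleftrightarrow> istop z"
  using Lv_cases[of z d] M2_moves[OF b2] M2_other by blast
lemma fixM1: "z \<in> Lv d \<Longrightarrow> M1 d b1 z = z \<longleftrightarrow> outer z \<and> \<not> istop z"
  using Lv_cases[of z d] M1_moves[OF b1] M1_other by blast
lemma outer_fix: "z \<in> Lv d \<Longrightarrow> outer z \<longleftrightarrow> M1 d b1 z = z \<or> M2 d b2 z = z"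
  using fixM1 fixM2 Lv_cases[of z d] by blast

lemma CL1:
  assumes v: "v \<in> Lv d" and ov: "outer v"
  shows "\<exists>y. y \<noteq> v \<and> (v, y) \<in> EE\<^sup>* \<and> outer y \<and> (\<forall>z. (v, z) \<in> EE\<^sup>* \<and> outer z \<longrightarrow> z = v \<or> z = y)"
proof (cases "istop v")
  case True
  have B: "M2 d b2 v = v" using fixM2[OF v] True by simp
  have A: "M1 d b1 v \<noteq> v" using fixM1[OF v] True by simp
  obtain y and w :: "lvl \<Rightarrow> bool" where y: "y \<noteq> v" "(v, y) \<in> EE\<^sup>*"
     "{z. (v, z) \<in> EE\<^sup>* \<and> (M1 d b1 z = z \<or> M2 d b2 z = z)} = {v, y}"
    using dih.end_case[OF D1 v B A] by blast
  have yL: "y \<in> Lv d" using EE_L[OF y(2) v] .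
  have "y \<in> {v, y}" by simp
  hence "outer y" using y(3) outer_fix[OF yL] by blast
  moreover have "\<forall>z. (v, z) \<in> EE\<^sup>* \<and> outer z \<longrightarrow> z = v \<or> z = y"
  proof (intro allI impI)
    fix z assume z: "(v, z) \<in> EE\<^sup>* \<and> outer z"
    have "z \<in> Lv d" using EE_L z v by blast
    hence "z \<in> {v, y}" using y(3) outer_fix z by blast
    thus "z = v \<or> z = y" by simp
  qed
  ultimately show ?thesis using y by blast
next
  case False
  have B: "M1 d b1 v = v" using fixM1[OF v] False ov by simp
  have A: "M2 d b2 v \<noteq> v" using fixM2[OF v] False by simp
  have ee: "Ed (M2 d b2) (M1 d b1) = EE" by (rule Ed_comm)
  obtain y and w :: "lvl \<Rightarrow> bool" where y: "y \<noteq> v" "(v, y) \<in> EE\<^sup>*"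
     "{z. (v, z) \<in> EE\<^sup>* \<and> (M2 d b2 z = z \<or> M1 d b1 z = z)} = {v, y}"
    using dih.end_case[OF D2 v B A] unfolding ee by blast
  have yL: "y \<in> Lv d" using EE_L[OF y(2) v] .
  have "y \<in> {v, y}" by simp
  hence "outer y" using y(3) outer_fix[OF yL] by blast
  moreover have "\<forall>z. (v, z) \<in> EE\<^sup>* \<and> outer z \<longrightarrow> z = v \<or> z = y"
  proof (intro allI impI)
    fix z assume z: "(v, z) \<in> EE\<^sup>* \<and> outer z"
    have "z \<in> Lv d" using EE_L z v by blast
    hence "z \<in> {v, y}" using y(3) outer_fix z by blast
    thus "z = v \<or> z = y" by simp
  qed
  ultimately show ?thesis using y by blast
qed

definition propr :: "lvl \<Rightarrow> (lvl \<Rightarrow> bool) \<Rightarrow> bool" where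
  "propr v w \<longleftrightarrow> (\<forall>z. (v, z) \<in> EE\<^sup>* \<longrightarrow> (M1 d b1 z \<noteq> z \<longrightarrow> w (M1 d b1 z) \<noteq> w z) \<and> (M2 d b2 z \<noteq> z \<longrightarrow> w (M2 d b2 z) \<noteq> w z))"

definition parit :: "lvl \<Rightarrow> (lvl \<Rightarrow> bool) \<Rightarrow> bool" where
  "parit v w \<longleftrightarrow> (\<forall>y z. (v, y) \<in> EE\<^sup>* \<longrightarrow> (v, z) \<in> EE\<^sup>* \<longrightarrow> outer y \<longrightarrow> outer z \<longrightarrow> y \<noteq> z \<longrightarrow> (w y \<noteq> w z \<longleftrightarrow> (istop y \<longleftrightarrow> istop z)))"

lemma EE_trans_iff: "(v, e) \<in> EE\<^sup>* \<Longrightarrow> (e, z) \<in> EE\<^sup>* \<longleftrightarrow> (v, z) \<in> EE\<^sup>*"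
  using EE_sym by (meson rtrancl_trans)

lemma CL2:
  assumes v: "v \<in> Lv d"
  shows "\<exists>w. propr v w \<and> parit v w"
proof -
  consider (t) e where "(v, e) \<in> EE\<^sup>*" "istop e" | (b) e where "(v, e) \<in> EE\<^sup>*" "outer e" "\<not> istop e"
     | (n) "\<forall>z. (v, z) \<in> EE\<^sup>* \<longrightarrow> \<not> outer z" by blast
  then show ?thesis
  proof cases
    case t
    have eL: "e \<in> Lv d" using EE_L t(1) v by blast
    have B: "M2 d b2 e = e" using fixM2[OF eL] t by simp
    have A: "M1 d b1 e \<noteq> e" using fixM1[OF eL] t by simp
    obtain y and w :: "lvl \<Rightarrow> bool" where y: "y \<noteq> e" "(e, y) \<in> EE\<^sup>*"
       "{z. (e, z) \<in> EE\<^sup>* \<and> (M1 d b1 z = z \<or> M2 d b2 z = z)} = {e, y}"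
       and pr: "\<forall>z. (e, z) \<in> EE\<^sup>* \<longrightarrow> (M1 d b1 z \<noteq> z \<longrightarrow> w (M1 d b1 z) \<noteq> w z) \<and> (M2 d b2 z \<noteq> z \<longrightarrow> w (M2 d b2 z) \<noteq> w z)"
       and wy: "(w y \<noteq> w e) = (M2 d b2 y = y)"
      using dih.end_case[OF D1 eL B A] by blast
    have "propr v w" unfolding propr_def using pr EE_trans_iff[OF t(1)] by blast
    moreover have "parit v w" unfolding parit_def
    proof (intro allI impI)
      fix p q assume p: "(v, p) \<in> EE\<^sup>*" and q: "(v, q) \<in> EE\<^sup>*" and op: "outer p" and oq: "outer q" and pq: "p \<noteq> q"
      have pL: "p \<in> Lv d" and qL: "q \<in> Lv d" using EE_L p q v by auto
      have "p \<in> {e, y}" using y(3) outer_fix[OF pL] op EE_trans_iff[OF t(1)] p by blast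
      moreover have "q \<in> {e, y}" using y(3) outer_fix[OF qL] oq EE_trans_iff[OF t(1)] q by blast
      moreover have yL: "y \<in> Lv d" using EE_L[OF y(2) eL] .
      ultimately show "(w p \<noteq> w q) = (istop p = istop q)"
        using pq wy fixM2[OF yL] t(2) by auto
    qed
    ultimately show ?thesis by blast
  next
    case b
    have eL: "e \<in> Lv d" using EE_L b(1) v by blast
    have B: "M1 d b1 e = e" using fixM1[OF eL] b by simp
    have A: "M2 d b2 e \<noteq> e" using fixM2[OF eL] b by simp
    have ee: "Ed (M2 d b2) (M1 d b1) = EE" by (rule Ed_comm)
    obtain y and w :: "lvl \<Rightarrow> bool" where y: "y \<noteq> e" "(e, y) \<in> EE\<^sup>*"
       "{z. (e, z) \<in> EE\<^sup>* \<and> (M2 d b2 z = z \<or> M1 d b1 z = z)} = {e, y}"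
       and pr: "\<forall>z. (e, z) \<in> EE\<^sup>* \<longrightarrow> (M2 d b2 z \<noteq> z \<longrightarrow> w (M2 d b2 z) \<noteq> w z) \<and> (M1 d b1 z \<noteq> z \<longrightarrow> w (M1 d b1 z) \<noteq> w z)"
       and wy: "(w y \<noteq> w e) = (M1 d b1 y = y)"
      using dih.end_case[OF D2 eL B A] unfolding ee by blast
    have "propr v w" unfolding propr_def using pr EE_trans_iff[OF b(1)] by blast
    moreover have "parit v w" unfolding parit_def
    proof (intro allI impI)
      fix p q assume p: "(v, p) \<in> EE\<^sup>*" and q: "(v, q) \<in> EE\<^sup>*" and op: "outer p" and oq: "outer q" and pq: "p \<noteq> q"
      have pL: "p \<in> Lv d" and qL: "q \<in> Lv d" using EE_L p q v by auto
      have "p \<in> {e, y}" using y(3) outer_fix[OF pL] op EE_trans_iff[OF b(1)] p by blast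
      moreover have "q \<in> {e, y}" using y(3) outer_fix[OF qL] oq EE_trans_iff[OF b(1)] q by blast
      moreover have yL: "y \<in> Lv d" using EE_L[OF y(2) eL] .
      moreover have "outer y" using y(3) outer_fix[OF yL] by blast
      ultimately show "(w p \<noteq> w q) = (istop p = istop q)"
        using pq wy fixM1[OF yL] b(3) by auto
    qed
    ultimately show ?thesis by blast
  next
    case n
    have nf: "\<forall>z. (v, z) \<in> EE\<^sup>* \<longrightarrow> M1 d b1 z \<noteq> z \<and> M2 d b2 z \<noteq> z"
      using n outer_fix EE_L v by blast
    obtain w :: "lvl \<Rightarrow> bool" where "\<forall>z. (v, z) \<in> EE\<^sup>* \<longrightarrow> w (M1 d b1 z) \<noteq> w z \<and> w (M2 d b2 z) \<noteq> w z"
      using dih.loop_case[OF D1 v nf] by blast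
    hence "propr v w" unfolding propr_def by blast
    moreover have "parit v w" unfolding parit_def using n by blast
    ultimately show ?thesis by blast
  qed
qed

end


definition LL :: "ori list \<Rightarrow> ori list \<Rightarrow> ori list \<Rightarrow> lvl \<Rightarrow> ori" where
  "LL u t s v = (case v of Top i \<Rightarrow> u!i | Mid j \<Rightarrow> t!j | Bot k \<Rightarrow> s!k)"

definition Wf :: "(lvl \<Rightarrow> ori) \<Rightarrow> lvl \<Rightarrow> bool" where
  "Wf l v = ((l v = Up) = (\<not> outer v))"

lemma labv_up: "labv u t x = LL u t s (up_v x)"
  unfolding labv_def LL_def up_v_def by (cases x) auto
lemma labv_lo: "labv t s x = LL u t s (lo_v x)"
  unfolding labv_def LL_def lo_v_def by (cases x) auto
lemma labv_outer: "labv u s x = LL u t s (outer_v x)"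
  unfolding labv_def LL_def outer_v_def by (cases x) auto
lemma Wd_up: "Wd u t x = (\<not> Wf (LL u t s) (up_v x))"
  unfolding Wd_def Wf_def labv_up[of u t x s] by (cases x) (auto simp: up_v_def outer_def)
lemma Wd_lo: "Wd t s x = Wf (LL u t s) (lo_v x)"
  unfolding Wd_def Wf_def labv_lo[of t s x u] by (cases x) (auto simp: lo_v_def outer_def)
lemma Wd_outer: "Wd u s x = (Wf (LL u t s) (outer_v x) \<noteq> istop (outer_v x))"
  unfolding Wd_def Wf_def labv_outer[of u s x t] by (cases x) (auto simp: outer_v_def outer_def istop_def)

lemma W_inj: "l v \<noteq> Circ \<Longrightarrow> l' v \<noteq> Circ \<Longrightarrow> Wf l v = Wf l' v \<Longrightarrow> l v = l' v"
  unfolding Wf_def by (cases "l v"; cases "l' v") auto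

definition consM :: "nat \<Rightarrow> (lvl \<Rightarrow> lvl) \<Rightarrow> (lvl \<Rightarrow> ori) \<Rightarrow> bool" where
  "consM d M l \<longleftrightarrow> (\<forall>v\<in>Lv d. M v \<noteq> v \<longrightarrow> ((l v = Circ) = (l (M v) = Circ)) \<and> (l v \<noteq> Circ \<longrightarrow> Wf l (M v) \<noteq> Wf l v))"

definition QM :: "(lvl \<Rightarrow> lvl) \<Rightarrow> (lvl \<Rightarrow> ori) \<Rightarrow> lvl \<Rightarrow> bool" where
  "QM M l v \<longleftrightarrow> ((l v = Circ) = (l (M v) = Circ)) \<and> (l v \<noteq> Circ \<longrightarrow> Wf l (M v) \<noteq> Wf l v)"

lemma consM_QM: "consM d M l \<longleftrightarrow> (\<forall>v\<in>Lv d. M v \<noteq> v \<longrightarrow> QM M l v)"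
  unfolding consM_def QM_def by blast

lemma okb1_cons:
  assumes b1: "b1 \<in> brauer d"
  shows "okb d b1 u t \<longleftrightarrow> consM d (M1 d b1) (LL u t s)"
proof -
  have body: "((labv u t x = Circ) = (labv u t (ptn b1 x) = Circ) \<and> (labv u t x \<noteq> Circ \<longrightarrow> Wd u t x \<noteq> Wd u t (ptn b1 x)))
     = QM (M1 d b1) (LL u t s) (up_v x)" if x: "x \<in> verts d" for x
    unfolding QM_def labv_up[of u t _ s] Wd_up[of u t _ s] M1_up[OF x] by auto
  have "okb d b1 u t \<longleftrightarrow> (\<forall>x\<in>verts d. QM (M1 d b1) (LL u t s) (up_v x))"
    unfolding okb_def using body by (simp cong: ball_cong)
  also have "\<dots> \<longleftrightarrow> (\<forall>v\<in>Lv d. M1 d b1 v \<noteq> v \<longrightarrow> QM (M1 d b1) (LL u t s) v)"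
  proof
    assume H: "\<forall>x\<in>verts d. QM (M1 d b1) (LL u t s) (up_v x)"
    show "\<forall>v\<in>Lv d. M1 d b1 v \<noteq> v \<longrightarrow> QM (M1 d b1) (LL u t s) v"
    proof (intro ballI impI)
      fix v assume "v \<in> Lv d" "M1 d b1 v \<noteq> v"
      hence "v \<in> up_v ` verts d" using M1_other by metis
      thus "QM (M1 d b1) (LL u t s) v" using H by blast
    qed
  next
    assume H: "\<forall>v\<in>Lv d. M1 d b1 v \<noteq> v \<longrightarrow> QM (M1 d b1) (LL u t s) v"
    show "\<forall>x\<in>verts d. QM (M1 d b1) (LL u t s) (up_v x)"
    proof
      fix x assume x: "x \<in> verts d"
      have "up_v x \<in> Lv d" using up_v_verts_L[OF x] .
      moreover have "M1 d b1 (up_v x) \<noteq> up_v x" using M1_moves[OF b1] x by blast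
      ultimately show "QM (M1 d b1) (LL u t s) (up_v x)" using H by blast
    qed
  qed
  finally show ?thesis unfolding consM_QM .
qed

lemma okb2_cons:
  assumes b2: "b2 \<in> brauer d"
  shows "okb d b2 t s \<longleftrightarrow> consM d (M2 d b2) (LL u t s)"
proof -
  have body: "((labv t s x = Circ) = (labv t s (ptn b2 x) = Circ) \<and> (labv t s x \<noteq> Circ \<longrightarrow> Wd t s x \<noteq> Wd t s (ptn b2 x)))
     = QM (M2 d b2) (LL u t s) (lo_v x)" if x: "x \<in> verts d" for x
    unfolding QM_def labv_lo[of t s _ u] Wd_lo[of t s _ u] M2_lo[OF x] by auto
  have "okb d b2 t s \<longleftrightarrow> (\<forall>x\<in>verts d. QM (M2 d b2) (LL u t s) (lo_v x))"
    unfolding okb_def using body by (simp cong: ball_cong)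
  also have "\<dots> \<longleftrightarrow> (\<forall>v\<in>Lv d. M2 d b2 v \<noteq> v \<longrightarrow> QM (M2 d b2) (LL u t s) v)"
  proof
    assume H: "\<forall>x\<in>verts d. QM (M2 d b2) (LL u t s) (lo_v x)"
    show "\<forall>v\<in>Lv d. M2 d b2 v \<noteq> v \<longrightarrow> QM (M2 d b2) (LL u t s) v"
    proof (intro ballI impI)
      fix v assume "v \<in> Lv d" "M2 d b2 v \<noteq> v"
      hence "v \<in> lo_v ` verts d" using M2_other by metis
      thus "QM (M2 d b2) (LL u t s) v" using H by blast
    qed
  next
    assume H: "\<forall>v\<in>Lv d. M2 d b2 v \<noteq> v \<longrightarrow> QM (M2 d b2) (LL u t s) v"
    show "\<forall>x\<in>verts d. QM (M2 d b2) (LL u t s) (lo_v x)"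
    proof
      fix x assume x: "x \<in> verts d"
      have "lo_v x \<in> Lv d" using lo_v_verts_L[OF x] .
      moreover have "M2 d b2 (lo_v x) \<noteq> lo_v x" using M2_moves[OF b2] x by blast
      ultimately show "QM (M2 d b2) (LL u t s) (lo_v x)" using H by blast
    qed
  qed
  finally show ?thesis unfolding consM_QM .
qed


lemma M1_ne_L: assumes "M1 d b c \<noteq> c" shows "c \<in> Lv d"
proof -
  have "c \<in> up_v ` verts d" using M1_other assms by metis
  then obtain x where "x \<in> verts d" "c = up_v x" by blast
  thus ?thesis using up_v_verts_L by simp
qed
lemma M2_ne_L: assumes "M2 d b c \<noteq> c" shows "c \<in> Lv d"
proof -
  have "c \<in> lo_v ` verts d" using M2_other assms by metis
  then obtain x where "x \<in> verts d" "c = lo_v x" by blast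
  thus ?thesis using lo_v_verts_L by simp
qed

lemma outer_outer_v: "outer (outer_v x)"
  unfolding outer_def outer_v_def by (cases x) auto

lemma outer_L_ex: "v \<in> Lv d \<Longrightarrow> outer v \<Longrightarrow> \<exists>x\<in>verts d. v = outer_v x"
  unfolding Lv_def outer_def
proof (elim UnE CollectE exE conjE)
  fix i assume "v = Top i" "i < d" thus "\<exists>x\<in>verts d. v = outer_v x"
    by (intro bexI[of _ "Inl i"]) (auto simp: outer_v_def verts_iff)
next
  fix i assume "v = Bot i" "i < d" thus "\<exists>x\<in>verts d. v = outer_v x"
    by (intro bexI[of _ "Inr i"]) (auto simp: outer_v_def verts_iff)
next
  fix i assume "v = Mid i" "(case v of Mid x \<Rightarrow> False | _ \<Rightarrow> True)" thus "\<exists>x\<in>verts d. v = outer_v x" by simp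
qed

context
  fixes d :: nat and b1 b2 :: diag
  assumes b1: "b1 \<in> brauer d" and b2: "b2 \<in> brauer d"
begin

abbreviation "EEd \<equiv> Ed (M1 d b1) (M2 d b2)"

definition cons :: "(lvl \<Rightarrow> ori) \<Rightarrow> bool" where
  "cons l \<longleftrightarrow> consM d (M1 d b1) l \<and> consM d (M2 d b2) l"

lemma circ_inv:
  assumes c: "cons l" and ac: "(a, c) \<in> EEd\<^sup>*"
  shows "(l a = Circ) = (l c = Circ)"
  using ac
proof (induction rule: rtrancl_induct)
  case (step y z)
  hence "z = M1 d b1 y \<or> z = M2 d b2 y" by (simp add: Ed_iff)
  thus ?case
  proof
    assume z: "z = M1 d b1 y"
    show ?thesis
    proof (cases "z = y")
      case False
      hence "y \<in> Lv d" using z M1_ne_L by blast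
      thus ?thesis using c False z step.IH unfolding cons_def consM_def by auto
    qed (use step.IH in simp)
  next
    assume z: "z = M2 d b2 y"
    show ?thesis
    proof (cases "z = y")
      case False
      hence "y \<in> Lv d" using z M2_ne_L by blast
      thus ?thesis using c False z step.IH unfolding cons_def consM_def by auto
    qed (use step.IH in simp)
  qed
qed simp

lemma W_prop:
  assumes c: "cons l" and pr: "propr d b1 b2 a w" and ac: "(a, c) \<in> EEd\<^sup>*" and na: "l a \<noteq> Circ"
  shows "(Wf l c = w c) = (Wf l a = w a)"
  using ac
proof (induction rule: rtrancl_induct)
  case (step y z)
  have ny: "l y \<noteq> Circ" using circ_inv[OF c step.hyps(1)] na by simp
  have "z = M1 d b1 y \<or> z = M2 d b2 y" using step.hyps(2) by (simp add: Ed_iff)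
  thus ?case
  proof
    assume z: "z = M1 d b1 y"
    show ?thesis
    proof (cases "z = y")
      case False
      hence yL: "y \<in> Lv d" using z M1_ne_L by blast
      have "Wf l z \<noteq> Wf l y" using c False z yL ny unfolding cons_def consM_def by auto
      moreover have "w z \<noteq> w y" using pr step.hyps(1) False z unfolding propr_def[OF b1 b2] by blast
      ultimately show ?thesis using step.IH by blast
    qed (use step.IH in simp)
  next
    assume z: "z = M2 d b2 y"
    show ?thesis
    proof (cases "z = y")
      case False
      hence yL: "y \<in> Lv d" using z M2_ne_L by blast
      have "Wf l z \<noteq> Wf l y" using c False z yL ny unfolding cons_def consM_def by auto
      moreover have "w z \<noteq> w y" using pr step.hyps(1) False z unfolding propr_def[OF b1 b2] by blast
      ultimately show ?thesis using step.IH by blast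
    qed (use step.IH in simp)
  qed
qed simp

definition blk :: "vert \<Rightarrow> vert set" where
  "blk y = {x \<in> verts d. (outer_v y, outer_v x) \<in> EEd\<^sup>*}"

lemma comp_eq: "comp_diag d b1 b2 = {blk y | y. y \<in> verts d}"
  unfolding comp_diag_def blk_def stack_rel_eq[OF b1 b2] ..

lemma blk_self: "y \<in> verts d \<Longrightarrow> y \<in> blk y"
  unfolding blk_def by simp

lemma blk_mem: assumes "x \<in> blk y" shows "blk x = blk y"
proof -
  have "(outer_v y, outer_v x) \<in> EEd\<^sup>*" using assms unfolding blk_def by blast
  thus ?thesis unfolding blk_def using EE_trans_iff[OF b1 b2] by blast
qed

lemma blk_pair: assumes y: "y \<in> verts d" shows "\<exists>y'\<in>verts d. y' \<noteq> y \<and> blk y = {y, y'}"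
proof -
  obtain z where z: "z \<noteq> outer_v y" "(outer_v y, z) \<in> EEd\<^sup>*" "outer z"
     "\<forall>w. (outer_v y, w) \<in> EEd\<^sup>* \<and> outer w \<longrightarrow> w = outer_v y \<or> w = z"
    using CL1[OF b1 b2 outer_v_verts_L[OF y] outer_outer_v] by blast
  have zL: "z \<in> Lv d" using EE_L[OF b1 b2 z(2) outer_v_verts_L[OF y]] .
  obtain y' where y': "y' \<in> verts d" "z = outer_v y'" using outer_L_ex[OF zL z(3)] by blast
  have "blk y = {y, y'}"
  proof (intro set_eqI iffI)
    fix x assume "x \<in> blk y"
    hence "x \<in> verts d" "(outer_v y, outer_v x) \<in> EEd\<^sup>*" unfolding blk_def by auto
    hence "outer_v x = outer_v y \<or> outer_v x = z" using z(4) outer_outer_v by blast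
    thus "x \<in> {y, y'}" using y'(2) outer_v_inj by auto
  next
    fix x assume "x \<in> {y, y'}"
    thus "x \<in> blk y" unfolding blk_def using y y' z(2) by auto
  qed
  moreover have "y' \<noteq> y" using z(1) y'(2) by auto
  ultimately show ?thesis using y' by blast
qed

lemma comp_brauer: "comp_diag d b1 b2 \<in> brauer d"
  unfolding brauer_def gen_brauer_def
proof (intro CollectI conjI ballI)
  fix B assume "B \<in> comp_diag d b1 b2"
  then obtain y where y: "y \<in> verts d" "B = blk y" unfolding comp_eq by blast
  obtain y' where "y' \<in> verts d" "y' \<noteq> y" "blk y = {y, y'}" using blk_pair[OF y(1)] by blast
  thus "B \<subseteq> verts d" "card B = 1 \<or> card B = 2" "card B = 2" using y by auto
next
  fix x assume x: "x \<in> verts d"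
  show "\<exists>!B. B \<in> comp_diag d b1 b2 \<and> x \<in> B"
  proof (rule ex1I[of _ "blk x"])
    show "blk x \<in> comp_diag d b1 b2 \<and> x \<in> blk x" unfolding comp_eq using x blk_self by blast
  next
    fix B assume "B \<in> comp_diag d b1 b2 \<and> x \<in> B"
    then obtain y where "B = blk y" "x \<in> blk y" unfolding comp_eq by blast
    thus "B = blk x" using blk_mem by simp
  qed
qed

lemma ptn_comp: assumes y: "y \<in> verts d" shows "blk y = {y, ptn (comp_diag d b1 b2) y}"
  using ptn_props(3)[OF comp_brauer y] y blk_self unfolding comp_eq by blast

end


lemma stack_rel_I1: "B \<in> c1 \<Longrightarrow> x \<in> B \<Longrightarrow> y \<in> B \<Longrightarrow> (up_v x, up_v y) \<in> stack_rel c1 c2"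
  unfolding stack_rel_def by (intro UnI1 CollectI exI conjI) (rule refl, blast)
lemma stack_rel_I2: "B \<in> c2 \<Longrightarrow> x \<in> B \<Longrightarrow> y \<in> B \<Longrightarrow> (lo_v x, lo_v y) \<in> stack_rel c1 c2"
  unfolding stack_rel_def by (intro UnI2 CollectI exI conjI) (rule refl, blast)

context
  fixes d :: nat and b1 b2 :: diag and u s :: "ori list"
  assumes b1: "b1 \<in> brauer d" and b2: "b2 \<in> brauer d" and lu: "length u = d" and ls: "length s = d"
begin

abbreviation "EEe \<equiv> Ed (M1 d b1) (M2 d b2)"
abbreviation "Ls t \<equiv> LL u t s"
abbreviation "cs \<equiv> cons d b1 b2"

lemma T_iff: "(okb d b1 u t \<and> okb d b2 t s) \<longleftrightarrow> cs (Ls t)"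
  unfolding cons_def[OF b1 b2] using okb1_cons[OF b1, of u t s] okb2_cons[OF b2, of t s u] by blast

lemma compat_of_T:
  assumes c: "cs (Ls t)"
  shows "okb d (comp_diag d b1 b2) u s"
  unfolding okb_def
proof (intro ballI conjI impI)
  fix x assume x: "x \<in> verts d"
  let ?y = "ptn (comp_diag d b1 b2) x"
  let ?l = "Ls t"
  have yb: "?y \<in> blk d b1 b2 x" using ptn_comp[OF b1 b2 x] by blast
  hence xy: "(outer_v x, outer_v ?y) \<in> EEe\<^sup>*" unfolding blk_def[OF b1 b2] by blast
  have ne: "?y \<noteq> x" using ptn_props(1)[OF comp_brauer[OF b1 b2] x] .
  show "(labv u s x = Circ) = (labv u s ?y = Circ)"
    unfolding labv_outer[of u s _ t] using circ_inv[OF b1 b2 c xy] .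
  assume nc: "labv u s x \<noteq> Circ"
  obtain w where pw: "propr d b1 b2 (outer_v x) w" "parit d b1 b2 (outer_v x) w"
    using CL2[OF b1 b2 outer_v_verts_L[OF x]] by blast
  have wp: "(Wf ?l (outer_v ?y) = w (outer_v ?y)) = (Wf ?l (outer_v x) = w (outer_v x))"
    using W_prop[OF b1 b2 c pw(1) xy] nc labv_outer[of u s x t] by simp
  have "(w (outer_v x) \<noteq> w (outer_v ?y)) = (istop (outer_v x) = istop (outer_v ?y))"
    using pw(2) unfolding parit_def[OF b1 b2] using xy outer_outer_v ne outer_v_inj by blast
  thus "Wd u s x \<noteq> Wd u s ?y"
    unfolding Wd_outer[of u s _ t] using wp by blast
qed

definition S1 where "S1 t = sub d b1 (labv u t)"
definition S2 where "S2 t = sub d b2 (labv t s)"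

definition Ep :: "(lvl \<Rightarrow> ori) \<Rightarrow> (lvl \<times> lvl) set" where
  "Ep l = {(a, M1 d b1 a) | a. l a \<noteq> Circ} \<union> {(a, M2 d b2 a) | a. l a \<noteq> Circ}"

lemma Ep_iff: "(a, c) \<in> Ep l \<longleftrightarrow> l a \<noteq> Circ \<and> (c = M1 d b1 a \<or> c = M2 d b2 a)"
  unfolding Ep_def by blast

lemma okb_of_T: assumes "cs (Ls t)" shows "okb d b1 u t" "okb d b2 t s"
  using T_iff assms by auto

lemma RS_Ep:
  assumes c: "cs (Ls t)"
  shows "(stack_rel (S1 t) (S2 t))\<^sup>* = (Ep (Ls t))\<^sup>*"
proof
  let ?l = "Ls t"
  have o1: "okb d b1 u t" and o2: "okb d b2 t s" using okb_of_T[OF c] by auto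
  have "stack_rel (S1 t) (S2 t) \<subseteq> (Ep ?l)\<^sup>*"
  proof (rule subrelI)
    fix a c assume "(a, c) \<in> stack_rel (S1 t) (S2 t)"
    then consider (u) x y B where "a = up_v x" "c = up_v y" "B \<in> S1 t" "x \<in> B" "y \<in> B"
      | (l) x y B where "a = lo_v x" "c = lo_v y" "B \<in> S2 t" "x \<in> B" "y \<in> B"
      unfolding stack_rel_iff by blast
    thus "(a, c) \<in> (Ep ?l)\<^sup>*"
    proof cases
      case u
      from u(3) consider "B \<in> b1" "\<forall>z\<in>B. labv u t z \<noteq> Circ" | z where "B = {z}"
        unfolding S1_def sub_def by blast
      thus ?thesis
      proof cases
        case 1
        have x: "x \<in> verts d" using gb_sub[OF br_gb[OF b1] 1(1)] u(4) by blast
        have "B = {x, ptn b1 x}" using ptn_props(3)[OF b1 x 1(1) u(4)] .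
        hence "y = x \<or> y = ptn b1 x" using u(5) by blast
        thus ?thesis
        proof
          assume "y = x" thus ?thesis using u by simp
        next
          assume "y = ptn b1 x"
          hence "c = M1 d b1 a" using u M1_up[OF x] by simp
          moreover have "labv u t x \<noteq> Circ" using 1(2) u(4) by blast
          hence "?l a \<noteq> Circ" using u(1) labv_up[of u t x s] by simp
          ultimately have "(a, c) \<in> Ep ?l" unfolding Ep_iff by simp
          thus ?thesis by (rule r_into_rtrancl)
        qed
      next
        case 2 thus ?thesis using u by simp
      qed
    next
      case l
      from l(3) consider "B \<in> b2" "\<forall>z\<in>B. labv t s z \<noteq> Circ" | z where "B = {z}"
        unfolding S2_def sub_def by blast
      thus ?thesis
      proof cases
        case 1
        have x: "x \<in> verts d" using gb_sub[OF br_gb[OF b2] 1(1)] l(4) by blast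
        have "B = {x, ptn b2 x}" using ptn_props(3)[OF b2 x 1(1) l(4)] .
        hence "y = x \<or> y = ptn b2 x" using l(5) by blast
        thus ?thesis
        proof
          assume "y = x" thus ?thesis using l by simp
        next
          assume "y = ptn b2 x"
          hence "c = M2 d b2 a" using l M2_lo[OF x] by simp
          moreover have "labv t s x \<noteq> Circ" using 1(2) l(4) by blast
          hence "?l a \<noteq> Circ" using l(1) labv_lo[of t s x u] by simp
          ultimately have "(a, c) \<in> Ep ?l" unfolding Ep_iff by simp
          thus ?thesis by (rule r_into_rtrancl)
        qed
      next
        case 2 thus ?thesis using l by simp
      qed
    qed
  qed
  thus "(stack_rel (S1 t) (S2 t))\<^sup>* \<subseteq> (Ep ?l)\<^sup>*" by (rule rtrancl_subset_rtrancl)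
  have "Ep ?l \<subseteq> (stack_rel (S1 t) (S2 t))\<^sup>*"
  proof (rule subrelI)
    fix a c assume "(a, c) \<in> Ep ?l"
    hence na: "?l a \<noteq> Circ" and cc: "c = M1 d b1 a \<or> c = M2 d b2 a" unfolding Ep_iff by auto
    from cc show "(a, c) \<in> (stack_rel (S1 t) (S2 t))\<^sup>*"
    proof
      assume cM: "c = M1 d b1 a"
      show ?thesis
      proof (cases "a \<in> up_v ` verts d")
        case True
        then obtain x where x: "x \<in> verts d" "a = up_v x" by blast
        have nx: "labv u t x \<noteq> Circ" using na x labv_up[of u t x s] by simp
        have "labv u t (ptn b1 x) \<noteq> Circ" using o1 x nx unfolding okb_def by blast
        hence "{x, ptn b1 x} \<in> S1 t" unfolding S1_def sub_def using ptn_props(2)[OF b1 x(1)] nx by auto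
        hence "(up_v x, up_v (ptn b1 x)) \<in> stack_rel (S1 t) (S2 t)" by (rule stack_rel_I1) auto
        thus ?thesis using cM x M1_up by auto
      next
        case False thus ?thesis using cM M1_other by simp
      qed
    next
      assume cM: "c = M2 d b2 a"
      show ?thesis
      proof (cases "a \<in> lo_v ` verts d")
        case True
        then obtain x where x: "x \<in> verts d" "a = lo_v x" by blast
        have nx: "labv t s x \<noteq> Circ" using na x labv_lo[of t s x u] by simp
        have "labv t s (ptn b2 x) \<noteq> Circ" using o2 x nx unfolding okb_def by blast
        hence "{x, ptn b2 x} \<in> S2 t" unfolding S2_def sub_def using ptn_props(2)[OF b2 x(1)] nx by auto
        hence "(lo_v x, lo_v (ptn b2 x)) \<in> stack_rel (S1 t) (S2 t)" by (rule stack_rel_I2) auto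
        thus ?thesis using cM x M2_lo by auto
      next
        case False thus ?thesis using cM M2_other by simp
      qed
    qed
  qed
  thus "(Ep ?l)\<^sup>* \<subseteq> (stack_rel (S1 t) (S2 t))\<^sup>*" by (rule rtrancl_subset_rtrancl)
qed

lemma Ep_char:
  assumes c: "cs l"
  shows "(a, c) \<in> (Ep l)\<^sup>* \<longleftrightarrow> a = c \<or> ((a, c) \<in> EEe\<^sup>* \<and> l a \<noteq> Circ)"
proof
  assume "(a, c) \<in> (Ep l)\<^sup>*"
  thus "a = c \<or> ((a, c) \<in> EEe\<^sup>* \<and> l a \<noteq> Circ)"
  proof (induction rule: rtrancl_induct)
    case (step y z)
    hence ny: "l y \<noteq> Circ" and yz: "(y, z) \<in> EEe" unfolding Ep_iff Ed_iff by auto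
    from step.IH show ?case
    proof
      assume "a = y" thus ?thesis using ny yz by auto
    next
      assume "(a, y) \<in> EEe\<^sup>* \<and> l a \<noteq> Circ"
      thus ?thesis using yz by (meson rtrancl.rtrancl_into_rtrancl)
    qed
  qed simp
next
  assume "a = c \<or> ((a, c) \<in> EEe\<^sup>* \<and> l a \<noteq> Circ)"
  thus "(a, c) \<in> (Ep l)\<^sup>*"
  proof
    assume h: "(a, c) \<in> EEe\<^sup>* \<and> l a \<noteq> Circ"
    from h have "(a, c) \<in> EEe\<^sup>*" by simp
    thus ?thesis
    proof (induction rule: rtrancl_induct)
      case (step y z)
      have "l y \<noteq> Circ" using circ_inv[OF b1 b2 c step.hyps(1)] h by simp
      hence "(y, z) \<in> Ep l" using step.hyps(2) unfolding Ep_iff Ed_iff by auto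
      thus ?case using step.IH by (meson rtrancl.rtrancl_into_rtrancl)
    qed simp
  qed simp
qed

lemma RS_char:
  assumes c: "cs (Ls t)"
  shows "(a, c) \<in> (stack_rel (S1 t) (S2 t))\<^sup>* \<longleftrightarrow> a = c \<or> ((a, c) \<in> EEe\<^sup>* \<and> Ls t a \<noteq> Circ)"
  unfolding RS_Ep[OF c] using Ep_char[OF c] .


definition bS where "bS t y = {x \<in> verts d. (outer_v y, outer_v x) \<in> (stack_rel (S1 t) (S2 t))\<^sup>*}"

lemma bS_eq:
  assumes c: "cs (Ls t)" and y: "y \<in> verts d"
  shows "bS t y = (if labv u s y = Circ then {y} else blk d b1 b2 y)"
proof (cases "labv u s y = Circ")
  case True
  hence "Ls t (outer_v y) = Circ" using labv_outer[of u s y t] by simp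
  hence "bS t y = {x \<in> verts d. outer_v y = outer_v x}" unfolding bS_def RS_char[OF c] by auto
  also have "\<dots> = {y}" using y outer_v_inj by auto
  finally show ?thesis using True by simp
next
  case False
  hence "Ls t (outer_v y) \<noteq> Circ" using labv_outer[of u s y t] by simp
  hence "bS t y = {x \<in> verts d. outer_v y = outer_v x \<or> (outer_v y, outer_v x) \<in> EEe\<^sup>*}" unfolding bS_def RS_char[OF c] by auto
  also have "\<dots> = blk d b1 b2 y" unfolding blk_def[OF b1 b2] using outer_v_inj by auto
  finally show ?thesis using False by simp
qed

lemma blk_circ:
  assumes c: "cs (Ls t)" and x: "x \<in> blk d b1 b2 y"
  shows "(labv u s x = Circ) = (labv u s y = Circ)"
proof -
  have "(outer_v y, outer_v x) \<in> EEe\<^sup>*" using x unfolding blk_def[OF b1 b2] by blast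
  from circ_inv[OF b1 b2 c this] show ?thesis using labv_outer[of u s _ t] by simp
qed

lemma comp_S:
  assumes c: "cs (Ls t)"
  shows "comp_diag d (S1 t) (S2 t) = sub d (comp_diag d b1 b2) (labv u s)"
proof -
  have cd: "comp_diag d (S1 t) (S2 t) = {bS t y | y. y \<in> verts d}" unfolding comp_diag_def bS_def ..
  show ?thesis unfolding cd
  proof (intro set_eqI iffI)
    fix B assume "B \<in> {bS t y | y. y \<in> verts d}"
    then obtain y where y: "y \<in> verts d" "B = bS t y" by blast
    show "B \<in> sub d (comp_diag d b1 b2) (labv u s)"
    proof (cases "labv u s y = Circ")
      case True thus ?thesis using y bS_eq[OF c y(1)] unfolding sub_def by auto
    next
      case False
      have "B = blk d b1 b2 y" using y bS_eq[OF c y(1)] False by simp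
      moreover have "blk d b1 b2 y \<in> comp_diag d b1 b2" unfolding comp_eq[OF b1 b2] using y(1) by blast
      moreover have "\<forall>x\<in>blk d b1 b2 y. labv u s x \<noteq> Circ" using blk_circ[OF c] False by blast
      ultimately show ?thesis unfolding sub_def by blast
    qed
  next
    fix B assume "B \<in> sub d (comp_diag d b1 b2) (labv u s)"
    then consider "B \<in> comp_diag d b1 b2" "\<forall>x\<in>B. labv u s x \<noteq> Circ" | x where "x \<in> verts d" "labv u s x = Circ" "B = {x}"
      unfolding sub_def by blast
    thus "B \<in> {bS t y | y. y \<in> verts d}"
    proof cases
      case 1
      then obtain y where y: "y \<in> verts d" "B = blk d b1 b2 y" unfolding comp_eq[OF b1 b2] by blast
      have "labv u s y \<noteq> Circ" using 1(2) y blk_self[OF b1 b2] by blast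
      hence "B = bS t y" using bS_eq[OF c y(1)] y(2) by simp
      thus ?thesis using y(1) by blast
    next
      case 2
      hence "B = bS t x" using bS_eq[OF c 2(1)] by simp
      thus ?thesis using 2(1) by blast
    qed
  qed
qed

definition cls where "cls v = {z. (v, z) \<in> EEe\<^sup>*}"

definition Loops where "Loops = {cls (Mid j) | j. j < d \<and> (\<forall>x\<in>verts d. (Mid j, outer_v x) \<notin> EEe\<^sup>*)}"

lemma Mid_L: "j < d \<Longrightarrow> Mid j \<in> Lv d" unfolding Lv_def by auto

lemma cls_L: "v \<in> Lv d \<Longrightarrow> cls v \<subseteq> Lv d"
  unfolding cls_def using EE_L[OF b1 b2] by blast

lemma finite_cls: "v \<in> Lv d \<Longrightarrow> finite (cls v)"
  using cls_L finite_Lv finite_subset by blast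

lemma card_cls_Mid: assumes j: "j < d" shows "2 \<le> card (cls (Mid j))"
proof -
  have "Mid j \<in> up_v ` verts d" using j unfolding up_img by blast
  hence ne: "M1 d b1 (Mid j) \<noteq> Mid j" using M1_moves[OF b1] by blast
  have "(Mid j, M1 d b1 (Mid j)) \<in> EEe" unfolding Ed_iff by simp
  hence "{Mid j, M1 d b1 (Mid j)} \<subseteq> cls (Mid j)" unfolding cls_def by auto
  moreover have "card {Mid j, M1 d b1 (Mid j)} = 2" using ne by simp
  ultimately show ?thesis using card_mono[OF finite_cls[OF Mid_L[OF j]]] by metis
qed

lemma finite_Loops: "finite Loops"
proof -
  have "Loops \<subseteq> Pow (Lv d)" unfolding Loops_def using cls_L Mid_L by blast
  thus ?thesis using finite_Lv finite_subset by blast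
qed

lemma nloops_orig: "n_loops d b1 b2 = card Loops"
proof -
  have "{{v. (Mid j, v) \<in> (stack_rel b1 b2)\<^sup>*} | j. j < d
        \<and> (\<forall>x\<in>verts d. (Mid j, outer_v x) \<notin> (stack_rel b1 b2)\<^sup>*)
        \<and> 2 \<le> card {v. (Mid j, v) \<in> (stack_rel b1 b2)\<^sup>*}} = Loops"
    unfolding stack_rel_eq[OF b1 b2] Loops_def cls_def[symmetric] using card_cls_Mid by blast
  thus ?thesis unfolding n_loops_def by simp
qed

lemma nloops_S:
  assumes c: "cs (Ls t)"
  shows "n_loops d (S1 t) (S2 t) = card {C \<in> Loops. \<forall>z\<in>C. Ls t z \<noteq> Circ}"
proof -
  let ?R = "(stack_rel (S1 t) (S2 t))\<^sup>*"
  have cl: "{v. (Mid j, v) \<in> ?R} = (if Ls t (Mid j) = Circ then {Mid j} else cls (Mid j))" for j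
    unfolding RS_char[OF c] cls_def by auto
  have "{{v. (Mid j, v) \<in> ?R} | j. j < d
        \<and> (\<forall>x\<in>verts d. (Mid j, outer_v x) \<notin> ?R)
        \<and> 2 \<le> card {v. (Mid j, v) \<in> ?R}} = {C \<in> Loops. \<forall>z\<in>C. Ls t z \<noteq> Circ}"
  proof (intro set_eqI iffI)
    fix C assume "C \<in> {{v. (Mid j, v) \<in> ?R} | j. j < d
        \<and> (\<forall>x\<in>verts d. (Mid j, outer_v x) \<notin> ?R)
        \<and> 2 \<le> card {v. (Mid j, v) \<in> ?R}}"
    then obtain j where j: "j < d" "C = {v. (Mid j, v) \<in> ?R}" "\<forall>x\<in>verts d. (Mid j, outer_v x) \<notin> ?R"
        "2 \<le> card {v. (Mid j, v) \<in> ?R}" by blast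
    have nc: "Ls t (Mid j) \<noteq> Circ" using j(4) cl[of j] by (auto split: if_splits)
    have C: "C = cls (Mid j)" using j(2) cl[of j] nc by simp
    have "\<forall>x\<in>verts d. (Mid j, outer_v x) \<notin> EEe\<^sup>*" using j(3) nc unfolding RS_char[OF c] by auto
    hence "C \<in> Loops" unfolding Loops_def using C j(1) by blast
    moreover have "\<forall>z\<in>C. Ls t z \<noteq> Circ" using C nc circ_inv[OF b1 b2 c] unfolding cls_def by blast
    ultimately show "C \<in> {C \<in> Loops. \<forall>z\<in>C. Ls t z \<noteq> Circ}" by blast
  next
    fix C assume "C \<in> {C \<in> Loops. \<forall>z\<in>C. Ls t z \<noteq> Circ}"
    then obtain j where j: "j < d" "C = cls (Mid j)" "\<forall>x\<in>verts d. (Mid j, outer_v x) \<notin> EEe\<^sup>*"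
       and nz: "\<forall>z\<in>C. Ls t z \<noteq> Circ" unfolding Loops_def by blast
    have nc: "Ls t (Mid j) \<noteq> Circ" using nz j(2) unfolding cls_def by blast
    have e: "{v. (Mid j, v) \<in> ?R} = C" using cl[of j] nc j(2) by simp
    have "\<forall>x\<in>verts d. (Mid j, outer_v x) \<notin> ?R"
      using j(3) unfolding RS_char[OF c] by (auto simp: outer_v_def split: sum.splits)
    moreover have "2 \<le> card {v. (Mid j, v) \<in> ?R}" using e j card_cls_Mid by simp
    ultimately show "C \<in> {{v. (Mid j, v) \<in> ?R} | j. j < d
        \<and> (\<forall>x\<in>verts d. (Mid j, outer_v x) \<notin> ?R)
        \<and> 2 \<le> card {v. (Mid j, v) \<in> ?R}}" using e j(1) by blast
  qed
  thus ?thesis unfolding n_loops_def by simp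
qed

lemma cls_sym: "(v, z) \<in> EEe\<^sup>* \<Longrightarrow> cls z = cls v"
  unfolding cls_def using EE_trans_iff[OF b1 b2] EE_sym[OF b1 b2] by blast

lemma propr_cong: "(z, y) \<in> EEe\<^sup>* \<Longrightarrow> propr d b1 b2 y = propr d b1 b2 z"
  unfolding propr_def[OF b1 b2, abs_def] using EE_trans_iff[OF b1 b2] EE_sym[OF b1 b2] by (intro ext) blast
lemma parit_cong: "(z, y) \<in> EEe\<^sup>* \<Longrightarrow> parit d b1 b2 y = parit d b1 b2 z"
  unfolding parit_def[OF b1 b2, abs_def] using EE_trans_iff[OF b1 b2] EE_sym[OF b1 b2] by (intro ext) blast

definition wg :: "lvl \<Rightarrow> bool" where
  "wg z = (SOME w. propr d b1 b2 z w \<and> parit d b1 b2 z w) z"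

lemma wg_good: assumes z: "z \<in> Lv d" shows "propr d b1 b2 z wg \<and> parit d b1 b2 z wg"
proof -
  define W where "W = (SOME w. propr d b1 b2 z w \<and> parit d b1 b2 z w)"
  have PW: "propr d b1 b2 z W \<and> parit d b1 b2 z W"
    unfolding W_def using someI_ex[OF CL2[OF b1 b2 z]] .
  have agree: "wg y = W y" if "(z, y) \<in> EEe\<^sup>*" for y
    unfolding wg_def W_def propr_cong[OF that] parit_cong[OF that] ..
  have "propr d b1 b2 z wg"
    unfolding propr_def[OF b1 b2]
  proof (intro allI impI conjI)
    fix c assume zc: "(z, c) \<in> EEe\<^sup>*"
    have "(z, M1 d b1 c) \<in> EEe\<^sup>*" "(z, M2 d b2 c) \<in> EEe\<^sup>*"
      using zc by (auto intro: rtrancl_into_rtrancl simp: Ed_iff)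
    moreover have "(M1 d b1 c \<noteq> c \<longrightarrow> W (M1 d b1 c) \<noteq> W c) \<and> (M2 d b2 c \<noteq> c \<longrightarrow> W (M2 d b2 c) \<noteq> W c)"
      using PW zc unfolding propr_def[OF b1 b2] by blast
    ultimately show "M1 d b1 c \<noteq> c \<Longrightarrow> wg (M1 d b1 c) \<noteq> wg c" "M2 d b2 c \<noteq> c \<Longrightarrow> wg (M2 d b2 c) \<noteq> wg c"
      using agree zc by auto
  qed
  moreover have "parit d b1 b2 z wg"
    using PW agree unfolding parit_def[OF b1 b2] by metis
  ultimately show ?thesis by blast
qed

definition rep :: "lvl set \<Rightarrow> lvl" where "rep C = (SOME z. z \<in> C)"

lemma Loops_E: assumes "C \<in> Loops"
  obtains j where "j < d" "C = cls (Mid j)" "\<forall>x\<in>verts d. (Mid j, outer_v x) \<notin> EEe\<^sup>*"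
  using assms unfolding Loops_def by blast

lemma rep_in: assumes "C \<in> Loops" shows "rep C \<in> C"
proof -
  obtain j where "C = cls (Mid j)" using Loops_E[OF assms] by metis
  hence "Mid j \<in> C" unfolding cls_def by simp
  thus ?thesis unfolding rep_def by (rule someI)
qed

lemma rep_rel: assumes "C \<in> Loops" "C = cls v" shows "(v, rep C) \<in> EEe\<^sup>*"
  using rep_in[OF assms(1)] assms(2) unfolding cls_def by blast

definition phi :: "ori list \<Rightarrow> lvl set \<Rightarrow> nat" where
  "phi t = restrict (\<lambda>C. if Ls t (rep C) = Circ then 0 else if Wf (Ls t) (rep C) = wg (rep C) then 1 else 2) Loops"

definition Tset where "Tset = {t \<in> oseq_hat d. cs (Ls t)}"

lemma phi_in: "phi t \<in> Loops \<rightarrow>\<^sub>E {0,1,2}"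
  unfolding phi_def by auto

lemma LL_outer: "outer v \<Longrightarrow> LL u t s v = LL u t' s v"
  unfolding LL_def outer_def by (cases v) auto

lemma Loops_mem: assumes C: "C \<in> Loops" and z: "z \<in> C" shows "(rep C, z) \<in> EEe\<^sup>*"
proof -
  obtain j where j: "C = cls (Mid j)" using Loops_E[OF C] by metis
  have "(Mid j, rep C) \<in> EEe\<^sup>*" using rep_rel[OF C j] .
  moreover have "(Mid j, z) \<in> EEe\<^sup>*" using z j unfolding cls_def by blast
  ultimately show ?thesis using EE_trans_iff[OF b1 b2] EE_sym[OF b1 b2] by blast
qed

lemma ncirc_eq:
  assumes t: "cs (Ls t)"
  shows "{C \<in> Loops. \<forall>z\<in>C. Ls t z \<noteq> Circ} = {C \<in> Loops. phi t C \<noteq> 0}"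
proof -
  have "(\<forall>z\<in>C. Ls t z \<noteq> Circ) \<longleftrightarrow> Ls t (rep C) \<noteq> Circ" if C: "C \<in> Loops" for C
    using circ_inv[OF b1 b2 t Loops_mem[OF C]] rep_in[OF C] by blast
  thus ?thesis unfolding phi_def by auto
qed

lemma phi_inj:
  assumes t: "t \<in> Tset" and t': "t' \<in> Tset" and e: "phi t = phi t'"
  shows "t = t'"
proof -
  have ct: "cs (Ls t)" and ct': "cs (Ls t')" and lt: "length t = d" and lt': "length t' = d"
    using t t' unfolding Tset_def oseq_hat_def by auto
  have mid: "Ls t (Mid j) = Ls t' (Mid j)" if j: "j < d" for j
  proof -
    let ?v = "Mid j"
    have vL: "?v \<in> Lv d" using Mid_L[OF j] .
    have good: "propr d b1 b2 ?v wg" using wg_good[OF vL] by blast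
    show ?thesis
    proof (cases "\<exists>x\<in>verts d. (?v, outer_v x) \<in> EEe\<^sup>*")
      case True
      then obtain x where x: "x \<in> verts d" "(?v, outer_v x) \<in> EEe\<^sup>*" by blast
      let ?e = "outer_v x"
      have ee: "Ls t ?e = Ls t' ?e" using LL_outer[OF outer_outer_v] by blast
      have c1: "(Ls t ?v = Circ) = (Ls t' ?v = Circ)"
        using circ_inv[OF b1 b2 ct x(2)] circ_inv[OF b1 b2 ct' x(2)] ee by simp
      show ?thesis
      proof (cases "Ls t ?v = Circ")
        case True thus ?thesis using c1 by simp
      next
        case False
        have n': "Ls t' ?v \<noteq> Circ" using False c1 by simp
        have "(Wf (Ls t) ?e = wg ?e) = (Wf (Ls t) ?v = wg ?v)" using W_prop[OF b1 b2 ct good x(2) False] .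
        moreover have "(Wf (Ls t') ?e = wg ?e) = (Wf (Ls t') ?v = wg ?v)" using W_prop[OF b1 b2 ct' good x(2) n'] .
        moreover have "Wf (Ls t) ?e = Wf (Ls t') ?e" unfolding Wf_def using ee by simp
        ultimately have "Wf (Ls t) ?v = Wf (Ls t') ?v" by blast
        thus ?thesis using W_inj False n' by blast
      qed
    next
      case False
      let ?C = "cls ?v"
      have C: "?C \<in> Loops" unfolding Loops_def using j False by blast
      have vr: "(?v, rep ?C) \<in> EEe\<^sup>*" using rep_rel[OF C refl] .
      have pe: "phi t ?C = phi t' ?C" using e by simp
      have c1: "(Ls t (rep ?C) = Circ) = (Ls t' (rep ?C) = Circ)"
        using pe C unfolding phi_def by (auto split: if_splits)
      have c2: "(Ls t ?v = Circ) = (Ls t' ?v = Circ)"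
        using circ_inv[OF b1 b2 ct vr] circ_inv[OF b1 b2 ct' vr] c1 by simp
      show ?thesis
      proof (cases "Ls t ?v = Circ")
        case True thus ?thesis using c2 by simp
      next
        case nc: False
        have n': "Ls t' ?v \<noteq> Circ" using nc c2 by simp
        have r1: "Ls t (rep ?C) \<noteq> Circ" using circ_inv[OF b1 b2 ct vr] nc by simp
        have r2: "Ls t' (rep ?C) \<noteq> Circ" using circ_inv[OF b1 b2 ct' vr] n' by simp
        have "(Wf (Ls t) (rep ?C) = wg (rep ?C)) = (Wf (Ls t') (rep ?C) = wg (rep ?C))"
          using pe C r1 r2 unfolding phi_def by (auto split: if_splits)
        moreover have "(Wf (Ls t) (rep ?C) = wg (rep ?C)) = (Wf (Ls t) ?v = wg ?v)" using W_prop[OF b1 b2 ct good vr nc] .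
        moreover have "(Wf (Ls t') (rep ?C) = wg (rep ?C)) = (Wf (Ls t') ?v = wg ?v)" using W_prop[OF b1 b2 ct' good vr n'] .
        ultimately have "Wf (Ls t) ?v = Wf (Ls t') ?v" by blast
        thus ?thesis using W_inj nc n' by blast
      qed
    qed
  qed
  show ?thesis
  proof (rule nth_equalityI)
    show "length t = length t'" using lt lt' by simp
    fix j assume "j < length t"
    thus "t ! j = t' ! j" using mid[of j] lt unfolding LL_def by simp
  qed
qed

definition pathv :: "lvl \<Rightarrow> bool" where "pathv v = (\<exists>e. outer e \<and> (v, e) \<in> EEe\<^sup>*)"
definition endp :: "lvl \<Rightarrow> lvl" where "endp v = (SOME e. outer e \<and> (v, e) \<in> EEe\<^sup>*)"
abbreviation "L0 \<equiv> LL u [] s"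

definition labf :: "(lvl set \<Rightarrow> nat) \<Rightarrow> lvl \<Rightarrow> ori" where
  "labf f v = (if pathv v then (if L0 (endp v) = Circ then Circ else if wg v = (Wf L0 (endp v) = wg (endp v)) then Up else Down)
     else (if f (cls v) = 0 then Circ else if (f (cls v) = 1) = wg v then Up else Down))"

definition tf :: "(lvl set \<Rightarrow> nat) \<Rightarrow> ori list" where
  "tf f = map (\<lambda>j. labf f (Mid j)) [0..<d]"

definition kap where "kap f v = (if pathv v then L0 (endp v) = Circ else f (cls v) = 0)"
definition iot where "iot f v = (if pathv v then Wf L0 (endp v) = wg (endp v) else f (cls v) = 1)"

lemma endp: "pathv v \<Longrightarrow> outer (endp v) \<and> (v, endp v) \<in> EEe\<^sup>*"
  unfolding pathv_def endp_def by (rule someI_ex)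

lemma class_inv:
  assumes vc: "(v, c) \<in> EEe\<^sup>*"
  shows "pathv c = pathv v" "endp c = endp v" "cls c = cls v"
proof -
  have eq: "\<And>e. (c, e) \<in> EEe\<^sup>* \<longleftrightarrow> (v, e) \<in> EEe\<^sup>*"
    using vc EE_trans_iff[OF b1 b2] EE_sym[OF b1 b2] by blast
  show "pathv c = pathv v" unfolding pathv_def using eq by simp
  show "endp c = endp v" unfolding endp_def using eq by simp
  show "cls c = cls v" unfolding cls_def using eq by simp
qed

lemma kap_iot_inv: "(v, c) \<in> EEe\<^sup>* \<Longrightarrow> kap f c = kap f v \<and> iot f c = iot f v"
  unfolding kap_def iot_def using class_inv by simp

lemma Ls_tf: assumes v: "v \<in> Lv d" shows "Ls (tf f) v = (if outer v then L0 v else labf f v)"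
proof (cases "outer v")
  case True thus ?thesis using LL_outer by simp
next
  case False
  then obtain j where "v = Mid j" "j < d" using v unfolding Lv_def outer_def by auto
  thus ?thesis unfolding tf_def LL_def using False by simp
qed

lemma outer_rel:
  assumes compat: "okb d (comp_diag d b1 b2) u s"
    and v: "v \<in> Lv d" "outer v" and e: "outer e" "(v, e) \<in> EEe\<^sup>*"
  shows "(L0 v = Circ) = (L0 e = Circ) \<and> (L0 v \<noteq> Circ \<longrightarrow> (Wf L0 v = wg v) = (Wf L0 e = wg e))"
proof -
  obtain x where x: "x \<in> verts d" "v = outer_v x" using outer_L_ex[OF v] by blast
  have eL: "e \<in> Lv d" using EE_L[OF b1 b2 e(2) v(1)] .
  obtain y where y: "y \<in> verts d" "e = outer_v y" using outer_L_ex[OF eL e(1)] by blast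
  have "y \<in> blk d b1 b2 x" unfolding blk_def[OF b1 b2] using y x e(2) by simp
  hence "y = x \<or> y = ptn (comp_diag d b1 b2) x" using ptn_comp[OF b1 b2 x(1)] by blast
  thus ?thesis
  proof
    assume "y = x" thus ?thesis using x y by simp
  next
    assume yp: "y = ptn (comp_diag d b1 b2) x"
    have ne: "y \<noteq> x" using yp ptn_props(1)[OF comp_brauer[OF b1 b2] x(1)] by simp
    have ok: "(labv u s x = Circ) = (labv u s y = Circ)" "labv u s x \<noteq> Circ \<longrightarrow> Wd u s x \<noteq> Wd u s y"
      using compat x(1) yp unfolding okb_def by blast+
    have l0: "\<And>z. labv u s z = L0 (outer_v z)" using labv_outer by blast
    have par: "parit d b1 b2 v wg" using wg_good[OF v(1)] by blast
    have "(wg v \<noteq> wg e) = (istop v = istop e)"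
      using par e v x y ne outer_v_inj unfolding parit_def[OF b1 b2] by blast
    moreover have "L0 v \<noteq> Circ \<longrightarrow> (Wf L0 v \<noteq> istop v) \<noteq> (Wf L0 e \<noteq> istop e)"
      using ok(2) x y unfolding l0 Wd_outer[of u s _ "[]"] by simp
    ultimately show ?thesis using ok(1) x y unfolding l0 by blast
  qed
qed

lemma K1:
  assumes compat: "okb d (comp_diag d b1 b2) u s" and v: "v \<in> Lv d"
  shows "(Ls (tf f) v = Circ) = kap f v \<and> (Ls (tf f) v \<noteq> Circ \<longrightarrow> (Wf (Ls (tf f)) v = wg v) = iot f v)"
proof (cases "outer v")
  case True
  have pv: "pathv v" unfolding pathv_def using True by blast
  have ep: "outer (endp v)" "(v, endp v) \<in> EEe\<^sup>*" using endp[OF pv] by auto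
  have "Ls (tf f) v = L0 v" using Ls_tf[OF v] True by simp
  moreover have "Wf (Ls (tf f)) v = Wf L0 v" unfolding Wf_def using Ls_tf[OF v] True by simp
  ultimately show ?thesis using outer_rel[OF compat v True ep] pv unfolding kap_def iot_def by simp
next
  case False
  have l: "Ls (tf f) v = labf f v" using Ls_tf[OF v] False by simp
  have w: "Wf (Ls (tf f)) v = (labf f v = Up)" unfolding Wf_def l using False by simp
  show ?thesis unfolding w l labf_def kap_def iot_def by auto
qed

lemma tf_cons:
  assumes compat: "okb d (comp_diag d b1 b2) u s"
  shows "cs (Ls (tf f))"
proof -
  let ?l = "Ls (tf f)"
  have gen: "QM M ?l v" if v: "v \<in> Lv d" and Mv: "M v \<noteq> v" and MvL: "M v \<in> Lv d"
      and rel: "(v, M v) \<in> EEe\<^sup>*" and wgd: "wg (M v) \<noteq> wg v" for M v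
  proof -
    have ki: "kap f (M v) = kap f v \<and> iot f (M v) = iot f v" using kap_iot_inv[OF rel] .
    show ?thesis unfolding QM_def using K1[OF compat v] K1[OF compat MvL] ki wgd by auto
  qed
  have c1: "consM d (M1 d b1) ?l" unfolding consM_QM
  proof (intro ballI impI)
    fix v assume v: "v \<in> Lv d" and ne: "M1 d b1 v \<noteq> v"
    have rel: "(v, M1 d b1 v) \<in> EEe\<^sup>*" by (rule r_into_rtrancl) (simp add: Ed_iff)
    have "wg (M1 d b1 v) \<noteq> wg v" using wg_good[OF v] ne unfolding propr_def[OF b1 b2] by blast
    thus "QM (M1 d b1) ?l v" using gen[of v "M1 d b1", OF v ne M1_L[OF b1 v] rel] by simp
  qed
  have c2: "consM d (M2 d b2) ?l" unfolding consM_QM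
  proof (intro ballI impI)
    fix v assume v: "v \<in> Lv d" and ne: "M2 d b2 v \<noteq> v"
    have rel: "(v, M2 d b2 v) \<in> EEe\<^sup>*" by (rule r_into_rtrancl) (simp add: Ed_iff)
    have "wg (M2 d b2 v) \<noteq> wg v" using wg_good[OF v] ne unfolding propr_def[OF b1 b2] by blast
    thus "QM (M2 d b2) ?l v" using gen[of v "M2 d b2", OF v ne M2_L[OF b2 v] rel] by simp
  qed
  show ?thesis unfolding cons_def[OF b1 b2] using c1 c2 by blast
qed

lemma tf_T: "okb d (comp_diag d b1 b2) u s \<Longrightarrow> tf f \<in> Tset"
  unfolding Tset_def oseq_hat_def using tf_cons by (simp add: tf_def)

lemma phi_tf:
  assumes compat: "okb d (comp_diag d b1 b2) u s" and f: "f \<in> Loops \<rightarrow>\<^sub>E {0,1,2}"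
  shows "phi (tf f) = f"
proof (rule PiE_ext[OF phi_in f])
  fix C assume C: "C \<in> Loops"
  obtain j where j: "j < d" "C = cls (Mid j)" "\<forall>x\<in>verts d. (Mid j, outer_v x) \<notin> EEe\<^sup>*"
    using Loops_E[OF C] by metis
  let ?r = "rep C"
  have jr: "(Mid j, ?r) \<in> EEe\<^sup>*" using rep_rel[OF C j(2)] .
  have rL: "?r \<in> Lv d" using EE_L[OF b1 b2 jr Mid_L[OF j(1)]] .
  have np: "\<not> pathv ?r"
  proof
    assume "pathv ?r"
    then obtain e where e: "outer e" "(?r, e) \<in> EEe\<^sup>*" unfolding pathv_def by blast
    have je: "(Mid j, e) \<in> EEe\<^sup>*" using jr e(2) by (rule rtrancl_trans)
    have "e \<in> Lv d" using EE_L[OF b1 b2 je Mid_L[OF j(1)]] .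
    then obtain x where "x \<in> verts d" "e = outer_v x" using outer_L_ex e(1) by blast
    thus False using j(3) je by blast
  qed
  have cr: "cls ?r = C" using class_inv(3)[OF jr] j(2) by simp
  have fC: "f C \<in> {0,1,2}" using f C by blast
  show "phi (tf f) C = f C"
    using K1[OF compat rL, of f] np cr fC C unfolding phi_def kap_def iot_def by auto
qed

lemma phi_bij:
  assumes compat: "okb d (comp_diag d b1 b2) u s"
  shows "bij_betw phi Tset (Loops \<rightarrow>\<^sub>E {0,1,2})"
  unfolding bij_betw_def
proof
  show "inj_on phi Tset" using phi_inj by (meson inj_onI)
  show "phi ` Tset = Loops \<rightarrow>\<^sub>E {0,1,2}"
  proof
    show "phi ` Tset \<subseteq> Loops \<rightarrow>\<^sub>E {0,1,2}" using phi_in by (simp add: image_subset_iff)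
    show "Loops \<rightarrow>\<^sub>E {0,1,2} \<subseteq> phi ` Tset"
    proof
      fix f :: "lvl set \<Rightarrow> nat" assume f: "f \<in> Loops \<rightarrow>\<^sub>E {0,1,2}"
      have "f = phi (tf f)" using phi_tf[OF compat f] by simp
      thus "f \<in> phi ` Tset" using tf_T[OF compat] by blast
    qed
  qed
qed

lemma count:
  fixes q :: complex
  assumes compat: "okb d (comp_diag d b1 b2) u s"
  shows "(\<Sum>t\<in>Tset. q ^ card {C \<in> Loops. phi t C \<noteq> 0}) = (2 * q + 1) ^ card Loops"
proof -
  let ?h = "\<lambda>C (a::nat). if a \<noteq> 0 then q else 1"
  have g: "q ^ card {C \<in> Loops. f C \<noteq> 0} = (\<Prod>C\<in>Loops. ?h C (f C))" for f :: "lvl set \<Rightarrow> nat"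
  proof -
    have "(\<Prod>C\<in>Loops. ?h C (f C)) = (\<Prod>C\<in>Loops \<inter> {C. f C \<noteq> 0}. q) * (\<Prod>C\<in>Loops \<inter> - {C. f C \<noteq> 0}. 1)"
      by (rule prod.If_cases[OF finite_Loops])
    also have "\<dots> = q ^ card (Loops \<inter> {C. f C \<noteq> 0})" by simp
    also have "Loops \<inter> {C. f C \<noteq> 0} = {C \<in> Loops. f C \<noteq> 0}" by blast
    finally show ?thesis by simp
  qed
  have "(\<Sum>t\<in>Tset. q ^ card {C \<in> Loops. phi t C \<noteq> 0}) = (\<Sum>f\<in>Loops \<rightarrow>\<^sub>E {0::nat,1,2}. q ^ card {C \<in> Loops. f C \<noteq> 0})"
    using sum.reindex_bij_betw[OF phi_bij[OF compat], of "\<lambda>f. q ^ card {C \<in> Loops. f C \<noteq> 0}"] .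
  also have "\<dots> = (\<Sum>f\<in>Loops \<rightarrow>\<^sub>E {0::nat,1,2}. \<Prod>C\<in>Loops. ?h C (f C))" using g by simp
  also have "\<dots> = (\<Prod>C\<in>Loops. \<Sum>a\<in>{0::nat,1,2}. ?h C a)"
    by (rule prod_sum_PiE[symmetric]) (use finite_Loops in auto)
  also have "\<dots> = (\<Prod>C\<in>Loops. 2 * q + 1)" by (simp add: algebra_simps)
  also have "\<dots> = (2 * q + 1) ^ card Loops" by (simp only: prod_constant)
  finally show ?thesis .
qed

lemma UNIV_ori: "(UNIV :: ori set) = {Up, Down, Circ}"
  using ori.exhaust by auto

lemma finite_oseq: "finite (oseq_hat d)"
proof -
  have "oseq_hat d = {xs. set xs \<subseteq> UNIV \<and> length xs = d}" unfolding oseq_hat_def by simp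
  moreover have "finite (UNIV :: ori set)" unfolding UNIV_ori by simp
  ultimately show ?thesis using finite_lists_length_eq by metis
qed

lemma finite_gb: "finite (gen_brauer d)"
proof -
  have "gen_brauer d \<subseteq> Pow (Pow (verts d))" unfolding gen_brauer_def by blast
  moreover have "finite (verts d)" unfolding verts_def by simp
  ultimately show ?thesis using finite_subset by blast
qed

lemma ob_comp_bvec:
  assumes a: "a \<in> gen_brauer d" and b: "b \<in> gen_brauer d"
  shows "ob_comp d q (bvec a) (bvec b) c = (if comp_diag d a b = c then q ^ n_loops d a b else 0)"
proof -
  have "ob_comp d q (bvec a) (bvec b) c = (\<Sum>x\<in>gen_brauer d. if x = a then (\<Sum>y\<in>gen_brauer d.
       (if y = b then (if comp_diag d x y = c then q ^ n_loops d x y else 0) else 0)) else 0)"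
    unfolding ob_comp_def bvec_def
  proof (intro sum.cong refl)
    fix x y
    show "(\<Sum>y\<in>gen_brauer d. if comp_diag d x y = c then (if x = a then 1 else 0) * (if y = b then 1 else 0) * q ^ n_loops d x y else 0)
        = (if x = a then \<Sum>y\<in>gen_brauer d. if y = b then if comp_diag d x y = c then q ^ n_loops d x y else 0 else 0 else 0)"
    proof (cases "x = a")
      case True
      have "\<And>y. (if comp_diag d x y = c then (if x = a then 1 else 0) * (if y = b then 1 else 0) * q ^ n_loops d x y else 0)
         = (if y = b then if comp_diag d x y = c then q ^ n_loops d x y else 0 else (0::complex))"
        using True by simp
      hence "(\<Sum>y\<in>gen_brauer d. if comp_diag d x y = c then (if x = a then 1 else 0) * (if y = b then 1 else 0) * q ^ n_loops d x y else 0)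
         = (\<Sum>y\<in>gen_brauer d. if y = b then if comp_diag d x y = c then q ^ n_loops d x y else 0 else 0)"
        by (rule sum.cong[OF refl])
      thus ?thesis using True by simp
    next
      case False thus ?thesis by (simp only: if_False mult_zero_left mult_zero_right if_cancel sum.neutral_const)
    qed
  qed
  also have "\<dots> = (if comp_diag d a b = c then q ^ n_loops d a b else 0)"
    using a b finite_gb by simp
  finally show ?thesis .
qed

lemma ob_comp_0l: "ob_comp d q (\<lambda>_. 0) g c = 0" unfolding ob_comp_def by (simp only: mult_zero_left mult_zero_right if_cancel sum.neutral_const)
lemma ob_comp_0r: "ob_comp d q g (\<lambda>_. 0) c = 0" unfolding ob_comp_def by (simp only: mult_zero_left mult_zero_right if_cancel sum.neutral_const)

lemma KK:
  fixes q :: complex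
  shows "(\<Sum>t\<in>oseq_hat d. ob_comp d q (Mb d b1 (u,t)) (Mb d b2 (t,s)) c)
        = (2 * q + 1) ^ n_loops d b1 b2 * Mb d (comp_diag d b1 b2) (u,s) c"
proof -
  have us: "u \<in> oseq_hat d" "s \<in> oseq_hat d" using lu ls unfolding oseq_hat_def by auto
  define X where "X t = (if comp_diag d (S1 t) (S2 t) = c then q ^ n_loops d (S1 t) (S2 t) else 0)" for t
  have tm: "ob_comp d q (Mb d b1 (u,t)) (Mb d b2 (t,s)) c = (if cs (Ls t) then X t else 0)"
    if t: "t \<in> oseq_hat d" for t
  proof (cases "cs (Ls t)")
    case True
    have o: "okb d b1 u t" "okb d b2 t s" using okb_of_T[OF True] by auto
    have g1: "S1 t \<in> gen_brauer d" using sub_ok(1)[OF b1 o(1)] unfolding S1_def hatB_def by blast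
    have g2: "S2 t \<in> gen_brauer d" using sub_ok(1)[OF b2 o(2)] unfolding S2_def hatB_def by blast
    have "Mb d b1 (u,t) = bvec (S1 t)" using Mb_eq[OF b1] us t o unfolding S1_def by simp
    moreover have "Mb d b2 (t,s) = bvec (S2 t)" using Mb_eq[OF b2] us t o unfolding S2_def by simp
    ultimately show ?thesis using ob_comp_bvec[OF g1 g2] True unfolding X_def by simp
  next
    case False
    hence "\<not> okb d b1 u t \<or> \<not> okb d b2 t s" using T_iff by blast
    thus ?thesis
    proof
      assume "\<not> okb d b1 u t"
      hence "Mb d b1 (u,t) = (\<lambda>_. 0)" using Mb_eq[OF b1] by simp
      thus ?thesis using False ob_comp_0l by simp
    next
      assume "\<not> okb d b2 t s"
      hence "Mb d b2 (t,s) = (\<lambda>_. 0)" using Mb_eq[OF b2] by simp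
      thus ?thesis using False ob_comp_0r by simp
    qed
  qed
  have "(\<Sum>t\<in>oseq_hat d. ob_comp d q (Mb d b1 (u,t)) (Mb d b2 (t,s)) c)
      = (\<Sum>t\<in>oseq_hat d. if cs (Ls t) then X t else 0)" using tm by simp
  also have "\<dots> = (\<Sum>t\<in>Tset. X t)" unfolding Tset_def using sum.inter_filter[OF finite_oseq] by metis
  finally have L: "(\<Sum>t\<in>oseq_hat d. ob_comp d q (Mb d b1 (u,t)) (Mb d b2 (t,s)) c) = (\<Sum>t\<in>Tset. X t)" .
  show ?thesis
  proof (cases "okb d (comp_diag d b1 b2) u s")
    case compat: True
    let ?C0 = "sub d (comp_diag d b1 b2) (labv u s)"
    have "X t = (if ?C0 = c then q ^ card {C \<in> Loops. phi t C \<noteq> 0} else 0)" if t: "t \<in> Tset" for t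
    proof -
      have ct: "cs (Ls t)" using t unfolding Tset_def by blast
      show ?thesis unfolding X_def comp_S[OF ct] nloops_S[OF ct] ncirc_eq[OF ct] ..
    qed
    hence "(\<Sum>t\<in>Tset. X t) = (if ?C0 = c then (\<Sum>t\<in>Tset. q ^ card {C \<in> Loops. phi t C \<noteq> 0}) else 0)"
      by simp
    also have "\<dots> = (if ?C0 = c then (2 * q + 1) ^ card Loops else 0)" using count[OF compat] by simp
    also have "\<dots> = (2 * q + 1) ^ n_loops d b1 b2 * Mb d (comp_diag d b1 b2) (u,s) c"
      using Mb_eq[OF comp_brauer[OF b1 b2]] us compat nloops_orig unfolding bvec_def by auto
    finally show ?thesis using L by simp
  next
    case False
    hence "Tset = {}" unfolding Tset_def using compat_of_T by blast
    moreover have "Mb d (comp_diag d b1 b2) (u,s) = (\<lambda>_. 0)" using Mb_eq[OF comp_brauer[OF b1 b2]] False by simp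
    ultimately show ?thesis using L by simp
  qed
qed
end


lemma finite_brauer: "finite (brauer d)"
proof -
  have "brauer d \<subseteq> Pow (Pow (verts d))" unfolding brauer_def gen_brauer_def by blast
  moreover have "finite (verts d)" unfolding verts_def by simp
  ultimately show ?thesis using finite_subset by blast
qed

lemma ob_comp_bilin:
  fixes a b :: "'i \<Rightarrow> complex"
  assumes I: "finite I" and J: "finite J"
  shows "ob_comp d q (\<lambda>c. \<Sum>i\<in>I. a i * F i c) (\<lambda>c. \<Sum>j\<in>J. b j * G j c) e
       = (\<Sum>i\<in>I. \<Sum>j\<in>J. a i * b j * ob_comp d q (F i) (G j) e)"
proof -
  have pt: "(if P then (\<Sum>i\<in>I. a i * F i B1) * (\<Sum>j\<in>J. b j * G j B2) * Q else 0)
     = (\<Sum>i\<in>I. \<Sum>j\<in>J. a i * b j * (if P then F i B1 * G j B2 * Q else 0))" for P B1 B2 and Q :: complex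
  proof (cases P)
    case True
    have "(\<Sum>i\<in>I. a i * F i B1) * (\<Sum>j\<in>J. b j * G j B2) * Q = (\<Sum>i\<in>I. \<Sum>j\<in>J. (a i * F i B1) * (b j * G j B2)) * Q"
      by (simp only: sum_product)
    also have "\<dots> = (\<Sum>i\<in>I. \<Sum>j\<in>J. a i * b j * (F i B1 * G j B2 * Q))"
      by (simp only: sum_distrib_right) (simp only: mult_ac)
    finally show ?thesis using True by simp
  next
    case False thus ?thesis by (simp only: if_False mult_zero_right sum.neutral_const)
  qed
  have "ob_comp d q (\<lambda>c. \<Sum>i\<in>I. a i * F i c) (\<lambda>c. \<Sum>j\<in>J. b j * G j c) e
     = (\<Sum>B1\<in>gen_brauer d. \<Sum>B2\<in>gen_brauer d. \<Sum>i\<in>I. \<Sum>j\<in>J. a i * b j *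
          (if comp_diag d B1 B2 = e then F i B1 * G j B2 * q ^ n_loops d B1 B2 else 0))"
    unfolding ob_comp_def pt ..
  also have "\<dots> = (\<Sum>i\<in>I. \<Sum>j\<in>J. \<Sum>B1\<in>gen_brauer d. \<Sum>B2\<in>gen_brauer d. a i * b j *
          (if comp_diag d B1 B2 = e then F i B1 * G j B2 * q ^ n_loops d B1 B2 else 0))"
  proof -
    have "(\<Sum>B1\<in>gen_brauer d. \<Sum>B2\<in>gen_brauer d. \<Sum>i\<in>I. \<Sum>j\<in>J. H B1 B2 i j)
        = (\<Sum>i\<in>I. \<Sum>j\<in>J. \<Sum>B1\<in>gen_brauer d. \<Sum>B2\<in>gen_brauer d. H B1 B2 i j)" for H :: "_ \<Rightarrow> _ \<Rightarrow> _ \<Rightarrow> _ \<Rightarrow> complex"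
    proof -
      have "(\<Sum>B1\<in>gen_brauer d. \<Sum>B2\<in>gen_brauer d. \<Sum>i\<in>I. \<Sum>j\<in>J. H B1 B2 i j)
          = (\<Sum>B1\<in>gen_brauer d. \<Sum>i\<in>I. \<Sum>B2\<in>gen_brauer d. \<Sum>j\<in>J. H B1 B2 i j)"
        by (rule sum.cong[OF refl], rule sum.swap)
      also have "\<dots> = (\<Sum>B1\<in>gen_brauer d. \<Sum>i\<in>I. \<Sum>j\<in>J. \<Sum>B2\<in>gen_brauer d. H B1 B2 i j)"
        by (rule sum.cong[OF refl], rule sum.cong[OF refl], rule sum.swap)
      also have "\<dots> = (\<Sum>i\<in>I. \<Sum>B1\<in>gen_brauer d. \<Sum>j\<in>J. \<Sum>B2\<in>gen_brauer d. H B1 B2 i j)"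
        by (rule sum.swap)
      also have "\<dots> = (\<Sum>i\<in>I. \<Sum>j\<in>J. \<Sum>B1\<in>gen_brauer d. \<Sum>B2\<in>gen_brauer d. H B1 B2 i j)"
        by (rule sum.cong[OF refl], rule sum.swap)
      finally show ?thesis .
    qed
    thus ?thesis .
  qed
  also have "\<dots> = (\<Sum>i\<in>I. \<Sum>j\<in>J. a i * b j * ob_comp d q (F i) (G j) e)"
    unfolding ob_comp_def by (simp only: sum_distrib_left)
  finally show ?thesis .
qed


lemma Mb_out: "\<not> (u \<in> oseq_hat d \<and> s \<in> oseq_hat d) \<Longrightarrow> Mb d b (u,s) = (\<lambda>_. 0)"
  unfolding Mb_def by auto

lemma psi_mult:
  fixes q :: complex
  shows "Psi d (br_mult d (2 * q + 1) x y) = mat_comp d q (Psi d x) (Psi d y)"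
proof (intro ext)
  fix us c
  obtain u s :: "ori list" where us: "us = (u, s)" by fastforce
  let ?B = "brauer d"
  let ?del = "2 * q + 1"
  have LHS: "Psi d (br_mult d ?del x y) (u,s) c
      = (\<Sum>b1\<in>?B. \<Sum>b2\<in>?B. x b1 * y b2 * ?del ^ n_loops d b1 b2 * Mb d (comp_diag d b1 b2) (u,s) c)"
  proof -
    have "Psi d (br_mult d ?del x y) (u,s) c = (\<Sum>b\<in>?B. (\<Sum>b1\<in>?B. \<Sum>b2\<in>?B.
        if comp_diag d b1 b2 = b then x b1 * y b2 * ?del ^ n_loops d b1 b2 else 0) * Mb d b (u,s) c)"
      unfolding Psi_def br_mult_def ..
    also have "\<dots> = (\<Sum>b\<in>?B. \<Sum>b1\<in>?B. \<Sum>b2\<in>?B.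
        (if comp_diag d b1 b2 = b then x b1 * y b2 * ?del ^ n_loops d b1 b2 * Mb d b (u,s) c else 0))"
    proof (rule sum.cong[OF refl])
      fix b
      have "(\<Sum>b1\<in>?B. \<Sum>b2\<in>?B. if comp_diag d b1 b2 = b then x b1 * y b2 * ?del ^ n_loops d b1 b2 else 0) * Mb d b (u,s) c
         = (\<Sum>b1\<in>?B. \<Sum>b2\<in>?B. (if comp_diag d b1 b2 = b then x b1 * y b2 * ?del ^ n_loops d b1 b2 else 0) * Mb d b (u,s) c)"
        by (simp only: sum_distrib_right)
      also have "\<dots> = (\<Sum>b1\<in>?B. \<Sum>b2\<in>?B. (if comp_diag d b1 b2 = b then x b1 * y b2 * ?del ^ n_loops d b1 b2 * Mb d b (u,s) c else 0))"
        by (intro sum.cong refl) simp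
      finally show "(\<Sum>b1\<in>?B. \<Sum>b2\<in>?B. if comp_diag d b1 b2 = b then x b1 * y b2 * ?del ^ n_loops d b1 b2 else 0) * Mb d b (u,s) c
         = (\<Sum>b1\<in>?B. \<Sum>b2\<in>?B. (if comp_diag d b1 b2 = b then x b1 * y b2 * ?del ^ n_loops d b1 b2 * Mb d b (u,s) c else 0))" .
    qed
    also have "\<dots> = (\<Sum>b1\<in>?B. \<Sum>b2\<in>?B. \<Sum>b\<in>?B.
        (if comp_diag d b1 b2 = b then x b1 * y b2 * ?del ^ n_loops d b1 b2 * Mb d b (u,s) c else 0))"
    proof -
      have "(\<Sum>b\<in>?B. \<Sum>b1\<in>?B. \<Sum>b2\<in>?B. H b b1 b2) = (\<Sum>b1\<in>?B. \<Sum>b2\<in>?B. \<Sum>b\<in>?B. H b b1 b2)"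
        for H :: "diag \<Rightarrow> diag \<Rightarrow> diag \<Rightarrow> complex"
      proof -
        have "(\<Sum>b\<in>?B. \<Sum>b1\<in>?B. \<Sum>b2\<in>?B. H b b1 b2) = (\<Sum>b1\<in>?B. \<Sum>b\<in>?B. \<Sum>b2\<in>?B. H b b1 b2)"
          by (rule sum.swap)
        also have "\<dots> = (\<Sum>b1\<in>?B. \<Sum>b2\<in>?B. \<Sum>b\<in>?B. H b b1 b2)"
          by (rule sum.cong[OF refl], rule sum.swap)
        finally show ?thesis .
      qed
      thus ?thesis .
    qed
    also have "\<dots> = (\<Sum>b1\<in>?B. \<Sum>b2\<in>?B. x b1 * y b2 * ?del ^ n_loops d b1 b2 * Mb d (comp_diag d b1 b2) (u,s) c)"
    proof (intro sum.cong refl)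
      fix b1 b2 assume "b1 \<in> ?B" "b2 \<in> ?B"
      hence "comp_diag d b1 b2 \<in> ?B" using comp_brauer by blast
      thus "(\<Sum>b\<in>?B. if comp_diag d b1 b2 = b then x b1 * y b2 * ?del ^ n_loops d b1 b2 * Mb d b (u,s) c else 0)
          = x b1 * y b2 * ?del ^ n_loops d b1 b2 * Mb d (comp_diag d b1 b2) (u,s) c"
        using sum.delta'[OF finite_brauer, of "comp_diag d b1 b2" "\<lambda>b. x b1 * y b2 * ?del ^ n_loops d b1 b2 * Mb d b (u,s) c"]
        by simp
    qed
    finally show ?thesis .
  qed
  show "Psi d (br_mult d ?del x y) us c = mat_comp d q (Psi d x) (Psi d y) us c"
  proof (cases "u \<in> oseq_hat d \<and> s \<in> oseq_hat d")
    case False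
    have "Psi d (br_mult d ?del x y) (u,s) c = 0"
      unfolding LHS using Mb_out[OF False] by (simp only: mult_zero_right sum.neutral_const)
    moreover have "mat_comp d q (Psi d x) (Psi d y) (u,s) = (\<lambda>_. 0)" unfolding mat_comp_def using False by (simp only: prod.case if_False)
    hence "mat_comp d q (Psi d x) (Psi d y) (u,s) c = 0" by simp
    ultimately show ?thesis using us by simp
  next
    case True
    have lu: "length u = d" and ls: "length s = d" using True unfolding oseq_hat_def by auto
    have "mat_comp d q (Psi d x) (Psi d y) (u,s) c
        = (\<Sum>t\<in>oseq_hat d. ob_comp d q (\<lambda>c. \<Sum>b1\<in>?B. x b1 * Mb d b1 (u,t) c) (\<lambda>c. \<Sum>b2\<in>?B. y b2 * Mb d b2 (t,s) c) c)"
      unfolding mat_comp_def Psi_def using True by simp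
    also have "\<dots> = (\<Sum>t\<in>oseq_hat d. \<Sum>b1\<in>?B. \<Sum>b2\<in>?B. x b1 * y b2 * ob_comp d q (Mb d b1 (u,t)) (Mb d b2 (t,s)) c)"
      by (intro sum.cong refl ob_comp_bilin finite_brauer)
    also have "\<dots> = (\<Sum>b1\<in>?B. \<Sum>b2\<in>?B. \<Sum>t\<in>oseq_hat d. x b1 * y b2 * ob_comp d q (Mb d b1 (u,t)) (Mb d b2 (t,s)) c)"
    proof -
      have "(\<Sum>t\<in>oseq_hat d. \<Sum>b1\<in>?B. \<Sum>b2\<in>?B. H t b1 b2) = (\<Sum>b1\<in>?B. \<Sum>b2\<in>?B. \<Sum>t\<in>oseq_hat d. H t b1 b2)"
        for H :: "ori list \<Rightarrow> diag \<Rightarrow> diag \<Rightarrow> complex"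
      proof -
        have "(\<Sum>t\<in>oseq_hat d. \<Sum>b1\<in>?B. \<Sum>b2\<in>?B. H t b1 b2) = (\<Sum>b1\<in>?B. \<Sum>t\<in>oseq_hat d. \<Sum>b2\<in>?B. H t b1 b2)"
          by (rule sum.swap)
        also have "\<dots> = (\<Sum>b1\<in>?B. \<Sum>b2\<in>?B. \<Sum>t\<in>oseq_hat d. H t b1 b2)"
          by (rule sum.cong[OF refl], rule sum.swap)
        finally show ?thesis .
      qed
      thus ?thesis .
    qed
    also have "\<dots> = (\<Sum>b1\<in>?B. \<Sum>b2\<in>?B. x b1 * y b2 * ?del ^ n_loops d b1 b2 * Mb d (comp_diag d b1 b2) (u,s) c)"
    proof (intro sum.cong refl)
      fix b1 b2 assume b1: "b1 \<in> ?B" and b2: "b2 \<in> ?B"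
      have "(\<Sum>t\<in>oseq_hat d. x b1 * y b2 * ob_comp d q (Mb d b1 (u,t)) (Mb d b2 (t,s)) c)
          = x b1 * y b2 * (\<Sum>t\<in>oseq_hat d. ob_comp d q (Mb d b1 (u,t)) (Mb d b2 (t,s)) c)"
        by (simp only: sum_distrib_left)
      also have "\<dots> = x b1 * y b2 * (?del ^ n_loops d b1 b2 * Mb d (comp_diag d b1 b2) (u,s) c)"
        using KK[OF b1 b2 lu ls] by simp
      finally show "(\<Sum>t\<in>oseq_hat d. x b1 * y b2 * ob_comp d q (Mb d b1 (u,t)) (Mb d b2 (t,s)) c)
          = x b1 * y b2 * ?del ^ n_loops d b1 b2 * Mb d (comp_diag d b1 b2) (u,s) c" by (simp only: mult_ac)
    qed
    finally show ?thesis using LHS us by simp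
  qed
qed

definition Id_d :: "nat \<Rightarrow> diag" where "Id_d d = {{Inl i, Inr i} | i. i < d}"

lemma Id_blocks: "B \<in> Id_d d \<longleftrightarrow> (\<exists>i<d. B = {Inl i, Inr i})"
  unfolding Id_d_def by blast

lemma Id_brauer: "Id_d d \<in> brauer d"
  unfolding brauer_def gen_brauer_def
proof (intro CollectI conjI ballI)
  fix B assume "B \<in> Id_d d"
  then obtain i where i: "i < d" "B = {Inl i, Inr i}" unfolding Id_blocks by blast
  thus "B \<subseteq> verts d" "card B = 1 \<or> card B = 2" "card B = 2" by (auto simp: verts_iff)
next
  fix x assume x: "x \<in> verts d"
  define i where "i = (case x of Inl i \<Rightarrow> i | Inr i \<Rightarrow> i)"
  have i: "i < d" "x \<in> {Inl i, Inr i}" using x unfolding i_def verts_iff by (cases x; simp)+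
  show "\<exists>!B. B \<in> Id_d d \<and> x \<in> B"
  proof (rule ex1I[of _ "{Inl i, Inr i}"])
    show "{Inl i, Inr i} \<in> Id_d d \<and> x \<in> {Inl i, Inr i}" using i unfolding Id_blocks by blast
  next
    fix B assume "B \<in> Id_d d \<and> x \<in> B"
    then obtain j where "j < d" "B = {Inl j, Inr j}" "x \<in> B" unfolding Id_blocks by blast
    thus "B = {Inl i, Inr i}" using i by auto
  qed
qed

lemma ptn_Id: assumes i: "i < d"
  shows "ptn (Id_d d) (Inl i) = Inr i" "ptn (Id_d d) (Inr i) = Inl i"
proof -
  have m: "{Inl i, Inr i} \<in> Id_d d" unfolding Id_blocks using i by blast
  have v: "Inl i \<in> verts d" "Inr i \<in> verts d" using i by (auto simp: verts_iff)
  have "{Inl i, Inr i} = {Inl i, ptn (Id_d d) (Inl i)}" using ptn_props(3)[OF Id_brauer v(1) m] by simp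
  thus "ptn (Id_d d) (Inl i) = Inr i" by (auto simp: doubleton_eq_iff)
  have "{Inl i, Inr i} = {Inr i, ptn (Id_d d) (Inr i)}" using ptn_props(3)[OF Id_brauer v(2) m] by simp
  thus "ptn (Id_d d) (Inr i) = Inl i" by (auto simp: doubleton_eq_iff)
qed

lemma okb_Id:
  assumes t: "length t = d" and s: "length s = d"
  shows "okb d (Id_d d) t s \<longleftrightarrow> t = s"
proof -
  have "okb d (Id_d d) t s \<longleftrightarrow> (\<forall>i<d. t!i = s!i)"
  proof
    assume ok: "okb d (Id_d d) t s"
    show "\<forall>i<d. t!i = s!i"
    proof (intro allI impI)
      fix i assume i: "i < d"
      have "Inl i \<in> verts d" using i by (simp add: verts_iff)
      hence "(t!i = Circ) = (s!i = Circ) \<and> (t!i \<noteq> Circ \<longrightarrow> (t!i = Up) = (s!i = Up))"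
        using ok ptn_Id[OF i] unfolding okb_def labv_def Wd_def by auto
      thus "t!i = s!i" by (cases "t!i"; cases "s!i") auto
    qed
  next
    assume e: "\<forall>i<d. t!i = s!i"
    show "okb d (Id_d d) t s" unfolding okb_def
    proof
      fix x assume "x \<in> verts d"
      then obtain i where i: "i < d" "x = Inl i \<or> x = Inr i" unfolding verts_iff by (cases x) auto
      show "(labv t s x = Circ) = (labv t s (ptn (Id_d d) x) = Circ) \<and>
         (labv t s x \<noteq> Circ \<longrightarrow> Wd t s x \<noteq> Wd t s (ptn (Id_d d) x))"
        using i ptn_Id[OF i(1)] e unfolding labv_def Wd_def by (cases "s!i") auto
    qed
  qed
  also have "\<dots> \<longleftrightarrow> t = s" using t s by (auto intro: nth_equalityI)
  finally show ?thesis .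
qed

lemma sub_Id: assumes s: "length s = d" shows "sub d (Id_d d) (labv s s) = ob_id d s"
proof (intro set_eqI iffI)
  fix B assume "B \<in> sub d (Id_d d) (labv s s)"
  then consider "B \<in> Id_d d" "\<forall>x\<in>B. labv s s x \<noteq> Circ" | x where "x \<in> verts d" "labv s s x = Circ" "B = {x}"
    unfolding sub_def by blast
  thus "B \<in> ob_id d s"
  proof cases
    case 1
    then obtain i where i: "i < d" "B = {Inl i, Inr i}" unfolding Id_blocks by blast
    hence "s!i \<noteq> Circ" using 1(2) unfolding labv_def by auto
    thus ?thesis unfolding ob_id_def using i by blast
  next
    case 2
    then obtain i where i: "i < d" "x = Inl i \<or> x = Inr i" unfolding verts_iff by (cases x) auto
    hence "s!i = Circ" using 2(2) unfolding labv_def by auto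
    thus ?thesis unfolding ob_id_def using i 2(3) by blast
  qed
next
  fix B assume "B \<in> ob_id d s"
  then consider i where "i < d" "s!i \<noteq> Circ" "B = {Inl i, Inr i}" | i where "i < d" "s!i = Circ" "B = {Inl i}"
    | i where "i < d" "s!i = Circ" "B = {Inr i}"
    unfolding ob_id_def by blast
  thus "B \<in> sub d (Id_d d) (labv s s)"
  proof cases
    case 1
    hence "B \<in> Id_d d" unfolding Id_blocks by blast
    moreover have "\<forall>x\<in>B. labv s s x \<noteq> Circ" using 1 unfolding labv_def by auto
    ultimately show ?thesis unfolding sub_def by blast
  next
    case 2
    hence "Inl i \<in> verts d" "labv s s (Inl i) = Circ" unfolding labv_def by (auto simp: verts_iff)
    thus ?thesis unfolding sub_def using 2(3) by blast
  next
    case 3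
    hence "Inr i \<in> verts d" "labv s s (Inr i) = Circ" unfolding labv_def by (auto simp: verts_iff)
    thus ?thesis unfolding sub_def using 3(3) by blast
  qed
qed

lemma psi_one: "Psi d (br_one d) = mat_id d"
proof (intro ext)
  fix ts c
  obtain t s :: "ori list" where ts: "ts = (t, s)" by fastforce
  have "Psi d (br_one d) (t,s) c = (\<Sum>b\<in>brauer d. (if b = Id_d d then 1 else 0) * Mb d b (t,s) c)"
    unfolding Psi_def br_one_def bvec_def Id_d_def by (intro sum.cong refl)
  also have "\<dots> = (\<Sum>b\<in>brauer d. if b = Id_d d then Mb d b (t,s) c else 0)"
    by (intro sum.cong refl) simp
  also have "\<dots> = Mb d (Id_d d) (t,s) c" using Id_brauer finite_brauer by simp
  also have "\<dots> = mat_id d (t,s) c"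
  proof (cases "t \<in> oseq_hat d \<and> s \<in> oseq_hat d")
    case True
    hence l: "length t = d" "length s = d" unfolding oseq_hat_def by auto
    show ?thesis
      using Mb_eq[OF Id_brauer] True okb_Id[OF l] sub_Id[OF l(2)] unfolding mat_id_def by auto
  next
    case False thus ?thesis using Mb_out[OF False] unfolding mat_id_def by auto
  qed
  finally show "Psi d (br_one d) ts c = mat_id d ts c" using ts by simp
qed

definition vkey :: "vert \<Rightarrow> nat" where "vkey x = (case x of Inl i \<Rightarrow> 2 * i | Inr i \<Rightarrow> 2 * i + 1)"

lemma vkey_inj: "vkey x = vkey y \<Longrightarrow> x = y"
  unfolding vkey_def by (cases x; cases y; simp; presburger)

lemma orient_ex:
  assumes b: "b \<in> brauer d"
  shows "\<exists>t s. t \<in> oseq_hat d \<and> s \<in> oseq_hat d \<and> okb d b t s \<and> (\<forall>x\<in>verts d. labv t s x \<noteq> Circ)"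
proof -
  define lab where "lab x = (if (vkey x < vkey (ptn b x)) = isl x then Up else Down)" for x
  define t where "t = map (\<lambda>i. lab (Inl i)) [0..<d]"
  define s where "s = map (\<lambda>i. lab (Inr i)) [0..<d]"
  have lv: "labv t s x = lab x" if "x \<in> verts d" for x
    using that unfolding labv_def t_def s_def by (cases x) (auto simp: verts_iff)
  have nc: "lab x \<noteq> Circ" for x unfolding lab_def by simp
  have wd: "Wd t s x = (vkey x < vkey (ptn b x))" if "x \<in> verts d" for x
    unfolding Wd_def lv[OF that] lab_def by auto
  have ok: "okb d b t s" unfolding okb_def
  proof
    fix x assume x: "x \<in> verts d"
    have px: "ptn b x \<in> verts d" by (rule ptn_verts[OF b x])
    have "vkey x \<noteq> vkey (ptn b x)" using vkey_inj ptn_props(1)[OF b x] by metis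
    hence "Wd t s x \<noteq> Wd t s (ptn b x)" using wd[OF x] wd[OF px] ptn_ptn[OF b x] by auto
    thus "(labv t s x = Circ) = (labv t s (ptn b x) = Circ) \<and> (labv t s x \<noteq> Circ \<longrightarrow> Wd t s x \<noteq> Wd t s (ptn b x))"
      using lv[OF x] lv[OF px] nc by simp
  qed
  show ?thesis
    apply (rule exI[where x=t], rule exI[where x=s])
    using ok lv nc unfolding oseq_hat_def t_def s_def by simp
qed

lemma Mb_at_b:
  assumes b: "b \<in> brauer d" and b': "b' \<in> brauer d" and t: "t \<in> oseq_hat d" and s: "s \<in> oseq_hat d"
    and ok: "okb d b t s" and nc: "\<forall>x\<in>verts d. labv t s x \<noteq> Circ"
  shows "Mb d b' (t,s) b = (if b' = b then 1 else 0)"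
proof (cases "okb d b' t s")
  case True
  have e1: "{B \<in> b'. \<forall>x\<in>B. labv t s x \<noteq> Circ} = b'"
    using nc gb_sub[OF br_gb[OF b']] by auto
  have e2: "{{x} | x. x \<in> verts d \<and> labv t s x = Circ} = {}"
    using nc by auto
  have "sub d b' (labv t s) = b'"
    unfolding sub_def e1 e2 by simp
  thus ?thesis using Mb_eq[OF b'] True t s unfolding bvec_def by auto
next
  case False
  hence "b' \<noteq> b" using ok by blast
  thus ?thesis using Mb_eq[OF b'] False by simp
qed

lemma psi_inj: "inj_on (Psi d) (br_alg d)"
proof (rule inj_onI)
  fix x y assume x: "x \<in> br_alg d" and y: "y \<in> br_alg d" and e: "Psi d x = Psi d y"
  show "x = y"
  proof (rule ext)
    fix b
    show "x b = y b"
    proof (cases "b \<in> brauer d")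
      case False
      have "x b = 0" using x False unfolding br_alg_def by simp
      moreover have "y b = 0" using y False unfolding br_alg_def by simp
      ultimately show ?thesis by simp
    next
      case b: True
      obtain t s :: "ori list" where ts: "t \<in> oseq_hat d" "s \<in> oseq_hat d" "okb d b t s" "\<forall>x\<in>verts d. labv t s x \<noteq> Circ"
        using orient_ex[OF b] by blast
      have ev: "Psi d z (t,s) b = z b" for z
      proof -
        have "Psi d z (t,s) b = (\<Sum>b'\<in>brauer d. z b' * (if b' = b then 1 else 0))"
          unfolding Psi_def
        proof (rule sum.cong[OF refl])
          fix b' assume "b' \<in> brauer d"
          thus "z b' * Mb d b' (t, s) b = z b' * (if b' = b then 1 else 0)" using Mb_at_b[OF b _ ts] by simp
        qed
        also have "\<dots> = (\<Sum>b'\<in>brauer d. if b' = b then z b' else 0)" by (intro sum.cong refl) simp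
        also have "\<dots> = z b" using b finite_brauer by simp
        finally show ?thesis .
      qed
      have "Psi d x (t,s) b = Psi d y (t,s) b" by (simp only: e)
      thus ?thesis unfolding ev .
    qed
  qed
qed

theorem proposition5p3:
  fixes m n d :: nat
  defines "\<delta> \<equiv> (of_int (2 * int m + 1 - 2 * int n) :: complex)"
      and "q \<equiv> (of_int (int m - int n) :: complex)"
  shows "(\<forall>x\<in>br_alg d. \<forall>y\<in>br_alg d.
            Psi d (br_mult d \<delta> x y) = mat_comp d q (Psi d x) (Psi d y))
       \<and> Psi d (br_one d) = mat_id d
       \<and> inj_on (Psi d) (br_alg d)"
proof -
  have dq: "\<delta> = 2 * q + 1" unfolding \<delta>_def q_def by simp
  show ?thesis unfolding dq using psi_mult psi_one psi_inj by blast
qed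

end
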